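(* Let $f\in L^2(\overline{\mathcal H}^3)$ be complex valued, and let $f_\sharp(x,t)=\Big(\frac{|f(x,t)|^2+|f(-x,-t)|^2}{2}\Big)^{1/2}$. Then $\|f\bar\mu*f\bar\mu\|_{L^2(\mathbb R^4)}\le\|f_\sharp\bar\mu*f_\sharp\bar\mu\|_{L^2(\mathbb R^4)}$.
   Context: $\overline{\mathcal H}^3=\{(x,t)\in\mathbb R^3\times\mathbb R:t^2=|x|^2-1\}$ with measure $d\bar\mu=\delta(t^2-|x|^2+1)\,dx\,dt$, i.e. $\int g\,d\bar\mu=\sum_{\pm}\int_{|y|>1}g(y,\pm\sqrt{|y|^2-1})\frac{dy}{\sqrt{|y|^2-1}}$. For $f\in L^2(\overline{\mathcal H}^3)$, $f\bar\mu*f\bar\mu$ denotes the convolution of the measure $f\bar\mu$ with itself, which is absolutely continuous with respect to Lebesgue measure on $\mathbb R^4$ and identified with its density. *)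

theory Defs
  imports "HOL-Analysis.Analysis"
begin

type_synonym pt4 = "(real^3) \<times> real"

definition hyp_weight :: "(real^3) \<times> bool \<Rightarrow> ennreal" where
  "hyp_weight yb = (if norm (fst yb) > 1
      then ennreal (1 / sqrt ((norm (fst yb))\<^sup>2 - 1)) else 0)"

definition hyp_param :: "(real^3) \<times> bool \<Rightarrow> pt4" where
  "hyp_param yb = (fst yb,
      (if snd yb then 1 else -1) * sqrt ((norm (fst yb))\<^sup>2 - 1))"

text \<open>The measure mu-bar on the hyperboloid, as a measure on R^3 x R:
  the integral of g is the sum over both signs of
  the integral over |y|>1 of g(y, +-sqrt(|y|^2-1)) / sqrt(|y|^2-1) dy.\<close>
definition hyp_mu :: "pt4 measure" where
  "hyp_mu = distr (density (lborel \<Otimes>\<^sub>M count_space UNIV) hyp_weight) borel hyp_param"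

definition in_L2_hyp :: "(pt4 \<Rightarrow> complex) \<Rightarrow> bool" where
  "in_L2_hyp f \<longleftrightarrow> f \<in> borel_measurable hyp_mu \<and>
       integrable hyp_mu (\<lambda>p. (norm (f p))\<^sup>2)"

text \<open>g (a function on R^4 = R^3 x R) is a Lebesgue density of the convolution
  measure (f mu) * (f mu), tested against continuous compactly supported functions.\<close>
definition is_conv_density :: "(pt4 \<Rightarrow> complex) \<Rightarrow> (pt4 \<Rightarrow> complex) \<Rightarrow> bool" where
  "is_conv_density f g \<longleftrightarrow> g \<in> borel_measurable lborel \<and>
     (\<forall>\<phi> :: pt4 \<Rightarrow> real. continuous_on UNIV \<phi> \<and> bounded {z. \<phi> z \<noteq> 0} \<longrightarrow>
        integrable lborel (\<lambda>z. g z * complex_of_real (\<phi> z)) \<and>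
        integrable (hyp_mu \<Otimes>\<^sub>M hyp_mu)
          (\<lambda>pq. f (fst pq) * f (snd pq) * complex_of_real (\<phi> (fst pq + snd pq))) \<and>
        (LINT z|lborel. g z * complex_of_real (\<phi> z)) =
        integral\<^sup>L (hyp_mu \<Otimes>\<^sub>M hyp_mu)
           (\<lambda>pq. f (fst pq) * f (snd pq) * complex_of_real (\<phi> (fst pq + snd pq))))"

definition f_sharp :: "(pt4 \<Rightarrow> complex) \<Rightarrow> pt4 \<Rightarrow> complex" where
  "f_sharp f p = complex_of_real
     (sqrt (((norm (f p))\<^sup>2 + (norm (f (- p)))\<^sup>2) / 2))"

definition L2sq :: "(pt4 \<Rightarrow> complex) \<Rightarrow> ennreal" where
  "L2sq g = (\<integral>\<^sup>+ z. ennreal ((norm (g z))\<^sup>2) \<partial>lborel)"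

end

theory Submission
  imports Defs
begin

lemma nn_integral_reflect_lborel:
  fixes G :: "'a::euclidean_space \<Rightarrow> ennreal"
  assumes [measurable]: "G \<in> borel_measurable borel"
  shows "(\<integral>\<^sup>+x. G (t - x) \<partial>lborel) = integral\<^sup>N lborel G"
proof -
  have L: "lborel = density (distr lborel borel (\<lambda>x. t + (-1::real) *\<^sub>R x)) (\<lambda>_. \<bar>-1::real\<bar>^DIM('a))"
    by (rule lborel_affine) simp
  have "integral\<^sup>N lborel G = integral\<^sup>N (density (distr lborel borel (\<lambda>x. t + (-1::real) *\<^sub>R x)) (\<lambda>_. \<bar>-1::real\<bar>^DIM('a))) G"
    using L by (rule arg_cong)
  also have "\<dots> = (\<integral>\<^sup>+x. G (t - x) \<partial>lborel)"
    by (simp add: nn_integral_density nn_integral_distr)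
  finally show ?thesis ..
qed

lemma nn_integral_translate_lborel:
  fixes G :: "'a::euclidean_space \<Rightarrow> ennreal"
  assumes [measurable]: "G \<in> borel_measurable borel"
  shows "(\<integral>\<^sup>+x. G (x + t) \<partial>lborel) = integral\<^sup>N lborel G"
proof -
  have "integral\<^sup>N lborel G = integral\<^sup>N (distr lborel borel ((+) t)) G"
    by (simp add: lborel_distr_plus)
  also have "\<dots> = (\<integral>\<^sup>+x. G (x + t) \<partial>lborel)"
    by (simp add: nn_integral_distr add.commute)
  finally show ?thesis ..
qed

lemma hyp_param_meas[measurable]: "hyp_param \<in> (lborel \<Otimes>\<^sub>M count_space UNIV) \<rightarrow>\<^sub>M borel"
  unfolding hyp_param_def by measurable

lemma hyp_weight_meas[measurable]: "hyp_weight \<in> borel_measurable (lborel \<Otimes>\<^sub>M count_space UNIV)"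
  unfolding hyp_weight_def by measurable

lemma sets_hyp_mu[measurable_cong, simp]: "sets hyp_mu = sets borel"
  unfolding hyp_mu_def by simp

lemma space_hyp_mu[simp]: "space hyp_mu = UNIV"
  unfolding hyp_mu_def by simp

lemma nn_integral_hyp_mu:
  assumes [measurable]: "F \<in> borel_measurable borel"
  shows "integral\<^sup>N hyp_mu F =
    (\<integral>\<^sup>+y. hyp_weight (y, True) * F (hyp_param (y, True)) + hyp_weight (y, False) * F (hyp_param (y, False)) \<partial>lborel)"
proof -
  interpret C: sigma_finite_measure "count_space (UNIV::bool set)"
    by (rule sigma_finite_measure_count_space_finite) simp
  have "integral\<^sup>N hyp_mu F = (\<integral>\<^sup>+yb. hyp_weight yb * F (hyp_param yb) \<partial>(lborel \<Otimes>\<^sub>M count_space UNIV))"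
    unfolding hyp_mu_def by (simp add: nn_integral_distr nn_integral_density)
  also have "\<dots> = (\<integral>\<^sup>+y. (\<integral>\<^sup>+b. hyp_weight (y,b) * F (hyp_param (y,b)) \<partial>count_space UNIV) \<partial>lborel)"
    by (rule C.nn_integral_fst[symmetric]) measurable
  also have "\<dots> = (\<integral>\<^sup>+y. hyp_weight (y, True) * F (hyp_param (y, True)) + hyp_weight (y, False) * F (hyp_param (y, False)) \<partial>lborel)"
    by (simp add: nn_integral_count_space_finite UNIV_bool add.commute)
  finally show ?thesis .
qed

lemma fst_borel_meas[measurable]: "fst \<in> borel_measurable (borel :: ('a::topological_space \<times> 'b::topological_space) measure)"
  by (intro borel_measurable_continuous_onI continuous_on_fst continuous_on_id)

lemma snd_borel_meas[measurable]: "snd \<in> borel_measurable (borel :: ('a::topological_space \<times> 'b::topological_space) measure)"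
  by (intro borel_measurable_continuous_onI continuous_on_snd continuous_on_id)

lemma hyp_param_neg: "- hyp_param (y, b) = hyp_param (- y, \<not> b)"
  unfolding hyp_param_def by auto

lemma hyp_weight_neg: "hyp_weight (- y, b) = hyp_weight (y, c)"
  unfolding hyp_weight_def by auto

lemma nn_integral_hyp_mu_reflect:
  assumes [measurable]: "F \<in> borel_measurable borel"
  shows "(\<integral>\<^sup>+p. F (- p) \<partial>hyp_mu) = integral\<^sup>N hyp_mu F"
proof -
  define G where "G y = hyp_weight (y, True) * F (hyp_param (y, True)) + hyp_weight (y, False) * F (hyp_param (y, False))" for y
  have [measurable]: "G \<in> borel_measurable borel" unfolding G_def by measurable
  have "(\<integral>\<^sup>+p. F (- p) \<partial>hyp_mu) = (\<integral>\<^sup>+y. G (0 - y) \<partial>lborel)"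
    apply (subst nn_integral_hyp_mu, measurable)
    apply (rule nn_integral_cong)
    apply (simp add: G_def hyp_param_neg)
    apply (metis add.commute hyp_weight_neg)
    done
  also have "\<dots> = integral\<^sup>N lborel G" by (rule nn_integral_reflect_lborel) simp
  also have "\<dots> = integral\<^sup>N hyp_mu F" unfolding G_def by (rule nn_integral_hyp_mu[symmetric]) simp
  finally show ?thesis .
qed

lemma emeasure_hyp_mu: "A \<in> sets borel \<Longrightarrow> emeasure hyp_mu A = (\<integral>\<^sup>+y. hyp_weight (y, True) * indicator A (hyp_param (y, True)) + hyp_weight (y, False) * indicator A (hyp_param (y, False)) \<partial>lborel)"
proof -
  assume [measurable]: "A \<in> sets borel"
  have "emeasure hyp_mu A = integral\<^sup>N hyp_mu (indicator A)" by simp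
  also have "\<dots> = (\<integral>\<^sup>+y. hyp_weight (y, True) * indicator A (hyp_param (y, True)) + hyp_weight (y, False) * indicator A (hyp_param (y, False)) \<partial>lborel)"
    by (rule nn_integral_hyp_mu) simp
  finally show ?thesis .
qed

lemma sigma_finite_hyp_mu: "sigma_finite_measure hyp_mu"
proof
  define A where "A n = {p::pt4. norm (fst p) \<le> real n \<and> \<bar>snd p\<bar> \<ge> 1 / Suc n}" for n
  define Z where "Z = {p::pt4. snd p = 0}"
  have [measurable]: "A n \<in> sets borel" for n unfolding A_def by measurable
  have [measurable]: "Z \<in> sets borel" unfolding Z_def by measurable
  have fin: "emeasure hyp_mu (A n) \<noteq> \<infinity>" for n
  proof -
    have "emeasure hyp_mu (A n) \<le> (\<integral>\<^sup>+y. ennreal (2 * Suc n) * indicator (cball 0 (real n)) (y::real^3) \<partial>lborel)"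
      unfolding emeasure_hyp_mu[OF \<open>A n \<in> sets borel\<close>]
    proof (rule nn_integral_mono)
      fix y :: "real^3"
      have w: "hyp_weight (y, b) * indicator (A n) (hyp_param (y, b)) \<le> ennreal (Suc n) * indicator (cball 0 (real n)) y" for b
      proof (cases "norm y > 1 \<and> hyp_param (y, b) \<in> A n")
        case True
        then have s: "sqrt ((norm y)\<^sup>2 - 1) \<ge> 1 / Suc n" "norm y \<le> n"
          by (cases b; auto simp: A_def hyp_param_def abs_mult)+
        have "0 < 1 / real (Suc n)" by simp
        then have sp: "sqrt ((norm y)\<^sup>2 - 1) > 0" using s by linarith
        have "1 / sqrt ((norm y)\<^sup>2 - 1) \<le> Suc n"
          using s sp by (simp add: field_simps)
        then have "ennreal (1 / sqrt ((norm y)\<^sup>2 - 1)) \<le> ennreal (Suc n)"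
          by (rule ennreal_leI)
        then show ?thesis using True s
          by (auto simp: hyp_weight_def indicator_def)
      next
        case False
        then show ?thesis by (auto simp: hyp_weight_def indicator_def)
      qed
      show "hyp_weight (y, True) * indicator (A n) (hyp_param (y, True)) + hyp_weight (y, False) * indicator (A n) (hyp_param (y, False))
         \<le> ennreal (real (2 * Suc n)) * indicator (cball 0 (real n)) y"
        using add_mono[OF w[of True] w[of False]]
        by (simp add: distrib_right[symmetric] ennreal_plus[symmetric] del: ennreal_plus)
    qed
    also have "\<dots> < \<infinity>"
      apply (simp add: nn_integral_cmult_indicator ennreal_mult_less_top)
      using emeasure_lborel_cball_finite[of "0::real^3" "real n"] by simp
    finally show ?thesis by simp
  qed
  have zz: "hyp_weight (y, b) * indicator Z (hyp_param (y, b)) = 0" for y :: "real^3" and b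
  proof (cases "norm y > 1")
    case True
    then have "(norm y)\<^sup>2 > 1" by (simp add: power2_eq_square) (metis less_1_mult)
    then show ?thesis by (auto simp: Z_def hyp_param_def indicator_def)
  qed (auto simp: hyp_weight_def)
  have z: "emeasure hyp_mu Z = 0"
    unfolding emeasure_hyp_mu[OF \<open>Z \<in> sets borel\<close>] zz by simp
  show "\<exists>AA. countable AA \<and> AA \<subseteq> sets hyp_mu \<and> \<Union> AA = space hyp_mu \<and> (\<forall>a\<in>AA. emeasure hyp_mu a \<noteq> \<infinity>)"
  proof (intro exI[of _ "insert Z (range A)"] conjI)
    have "p \<in> Z \<union> (\<Union>n. A n)" for p :: pt4
    proof (cases "snd p = 0")
      case False
      obtain n :: nat where n: "n \<ge> norm (fst p)" "n \<ge> 1 / \<bar>snd p\<bar>"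
        using real_arch_simple[of "max (norm (fst p)) (1/\<bar>snd p\<bar>)"] by auto
      have "1 / real (Suc n) \<le> 1 / (1 / \<bar>snd p\<bar>)"
        using n False by (intro divide_left_mono) auto
      then have "1 / real (Suc n) \<le> \<bar>snd p\<bar>" by simp
      then show ?thesis using n by (auto simp: A_def)
    qed (auto simp: Z_def)
    then show "\<Union> (insert Z (range A)) = space hyp_mu" by auto
  qed (use fin z in auto)
qed

interpretation HM: sigma_finite_measure hyp_mu by (rule sigma_finite_hyp_mu)
interpretation HH: pair_sigma_finite hyp_mu hyp_mu ..

definition Wf :: "(pt4 \<Rightarrow> ennreal) \<Rightarrow> pt4 \<Rightarrow> ennreal" where
  "Wf U d = (\<integral>\<^sup>+t. U (d + t) * U t \<partial>lborel)"

lemma Wf_meas[measurable]: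
  assumes [measurable]: "U \<in> borel_measurable borel"
  shows "Wf U \<in> borel_measurable borel"
  unfolding Wf_def by measurable

lemma hyp_meas_triv: "(\<lambda>x. F x) \<in> borel_measurable borel \<Longrightarrow> F \<in> borel_measurable hyp_mu"
  by simp

lemma square_expand:
  assumes [measurable]: "A \<in> borel_measurable borel" "B \<in> borel_measurable borel" "U \<in> borel_measurable borel"
  shows "(\<integral>\<^sup>+y. (\<integral>\<^sup>+x. A (fst x) * B (snd x) * U (fst x + snd x - y) \<partial>(hyp_mu \<Otimes>\<^sub>M hyp_mu))\<^sup>2 \<partial>lborel)
    = (\<integral>\<^sup>+p1. \<integral>\<^sup>+p2. \<integral>\<^sup>+p3. \<integral>\<^sup>+p4. A p1 * B p2 * A p3 * B p4 * Wf U (p1 + p2 - p3 - p4) \<partial>hyp_mu \<partial>hyp_mu \<partial>hyp_mu \<partial>hyp_mu)"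
proof -
  let ?M = "hyp_mu \<Otimes>\<^sub>M hyp_mu"
  define F where "F y x = A (fst x) * B (snd x) * U (fst x + snd x - y)" for y x
  have [measurable]: "(\<lambda>(y, x). F y x) \<in> borel_measurable (lborel \<Otimes>\<^sub>M ?M)"
    unfolding F_def by measurable
  have [measurable]: "F y \<in> borel_measurable ?M" for y
    unfolding F_def by measurable
  have sq: "(integral\<^sup>N ?M (F y))\<^sup>2 = (\<integral>\<^sup>+x. \<integral>\<^sup>+x'. F y x * F y x' \<partial>?M \<partial>?M)" for y
    by (simp add: power2_eq_square nn_integral_cmult nn_integral_multc)
  have "(\<integral>\<^sup>+y. (integral\<^sup>N ?M (F y))\<^sup>2 \<partial>lborel) = (\<integral>\<^sup>+y. \<integral>\<^sup>+x. \<integral>\<^sup>+x'. F y x * F y x' \<partial>?M \<partial>?M \<partial>lborel)"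
    by (simp add: sq)
  also have "\<dots> = (\<integral>\<^sup>+x. \<integral>\<^sup>+y. \<integral>\<^sup>+x'. F y x * F y x' \<partial>?M \<partial>lborel \<partial>?M)"
    by (rule pair_sigma_finite.Fubini') (unfold_locales, measurable)
  also have "\<dots> = (\<integral>\<^sup>+x. \<integral>\<^sup>+x'. \<integral>\<^sup>+y. F y x * F y x' \<partial>lborel \<partial>?M \<partial>?M)"
    apply (rule nn_integral_cong)
    by (rule pair_sigma_finite.Fubini') (unfold_locales, measurable)
  also have "\<dots> = (\<integral>\<^sup>+x. \<integral>\<^sup>+x'. A (fst x) * B (snd x) * A (fst x') * B (snd x') * Wf U (fst x + snd x - fst x' - snd x') \<partial>?M \<partial>?M)"
  proof (intro nn_integral_cong)
    fix x x' :: "pt4 \<times> pt4"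
    have "(\<integral>\<^sup>+y. F y x * F y x' \<partial>lborel) = (\<integral>\<^sup>+y. (A (fst x) * B (snd x) * A (fst x') * B (snd x')) * (U (fst x + snd x - y) * U (fst x' + snd x' - y)) \<partial>lborel)"
      by (rule nn_integral_cong) (simp add: F_def mult_ac)
    also have "\<dots> = (A (fst x) * B (snd x) * A (fst x') * B (snd x')) * (\<integral>\<^sup>+y. U (fst x + snd x - y) * U (fst x' + snd x' - y) \<partial>lborel)"
      by (rule nn_integral_cmult) measurable
    also have "(\<integral>\<^sup>+y. U (fst x + snd x - y) * U (fst x' + snd x' - y) \<partial>lborel)
        = (\<integral>\<^sup>+t. U (fst x + snd x - (fst x' + snd x' - t)) * U (fst x' + snd x' - (fst x' + snd x' - t)) \<partial>lborel)"
      by (rule nn_integral_reflect_lborel[symmetric]) measurable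
    also have "\<dots> = Wf U (fst x + snd x - fst x' - snd x')"
      unfolding Wf_def by (rule nn_integral_cong) (simp add: algebra_simps)
    finally show "(\<integral>\<^sup>+y. F y x * F y x' \<partial>lborel) = A (fst x) * B (snd x) * A (fst x') * B (snd x') * Wf U (fst x + snd x - fst x' - snd x')" .
  qed
  also have "\<dots> = (\<integral>\<^sup>+p1. \<integral>\<^sup>+p2. \<integral>\<^sup>+p3. \<integral>\<^sup>+p4. A p1 * B p2 * A p3 * B p4 * Wf U (p1 + p2 - p3 - p4) \<partial>hyp_mu \<partial>hyp_mu \<partial>hyp_mu \<partial>hyp_mu)"
    apply (subst HM.nn_integral_fst[symmetric], measurable)
    apply (rule nn_integral_cong)+
    apply (subst HM.nn_integral_fst[symmetric], measurable)
    done
  finally show ?thesis unfolding F_def .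
qed

lemma four_perm:
  assumes [measurable]: "A \<in> borel_measurable borel" "W \<in> borel_measurable borel"
  shows "(\<integral>\<^sup>+p1. \<integral>\<^sup>+p2. \<integral>\<^sup>+p3. \<integral>\<^sup>+p4. A p1 * A (- p2) * A p3 * A (- p4) * W (p1 + p2 - p3 - p4) \<partial>hyp_mu \<partial>hyp_mu \<partial>hyp_mu \<partial>hyp_mu)
    = (\<integral>\<^sup>+p1. \<integral>\<^sup>+p2. \<integral>\<^sup>+p3. \<integral>\<^sup>+p4. A p1 * A p2 * A p3 * A p4 * W (p1 + p2 - p3 - p4) \<partial>hyp_mu \<partial>hyp_mu \<partial>hyp_mu \<partial>hyp_mu)"
proof -
  have "(\<integral>\<^sup>+p1. \<integral>\<^sup>+p2. \<integral>\<^sup>+p3. \<integral>\<^sup>+p4. A p1 * A (- p2) * A p3 * A (- p4) * W (p1 + p2 - p3 - p4) \<partial>hyp_mu \<partial>hyp_mu \<partial>hyp_mu \<partial>hyp_mu)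
    = (\<integral>\<^sup>+p1. \<integral>\<^sup>+p2. \<integral>\<^sup>+p3. \<integral>\<^sup>+p4. A p1 * A (- p2) * A p3 * A p4 * W (p1 + p2 - p3 + p4) \<partial>hyp_mu \<partial>hyp_mu \<partial>hyp_mu \<partial>hyp_mu)"
    apply (rule nn_integral_cong, rule nn_integral_cong, rule nn_integral_cong)
    subgoal for p1 p2 p3
      using nn_integral_hyp_mu_reflect[of "\<lambda>p4. A p1 * A (- p2) * A p3 * A p4 * W (p1 + p2 - p3 + p4)"] by simp
    done
  also have "\<dots> = (\<integral>\<^sup>+p1. \<integral>\<^sup>+p2. \<integral>\<^sup>+p3. \<integral>\<^sup>+p4. A p1 * A p2 * A p3 * A p4 * W (p1 - p2 - p3 + p4) \<partial>hyp_mu \<partial>hyp_mu \<partial>hyp_mu \<partial>hyp_mu)"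
    apply (rule nn_integral_cong)
    subgoal for p1
      using nn_integral_hyp_mu_reflect[of "\<lambda>p2. \<integral>\<^sup>+p3. \<integral>\<^sup>+p4. A p1 * A p2 * A p3 * A p4 * W (p1 - p2 - p3 + p4) \<partial>hyp_mu \<partial>hyp_mu"] by simp
    done
  also have "\<dots> = (\<integral>\<^sup>+p1. \<integral>\<^sup>+p2. \<integral>\<^sup>+p3. \<integral>\<^sup>+p4. A p1 * A p2 * A p3 * A p4 * W (p1 + p2 - p3 - p4) \<partial>hyp_mu \<partial>hyp_mu \<partial>hyp_mu \<partial>hyp_mu)"
  proof (rule nn_integral_cong)
    fix p1
    define K where "K a b c = A p1 * A a * A b * A c * W (p1 - a - b + c)" for a b c
    have [measurable]: "(\<lambda>x. K (fst x) (fst (snd x)) (snd (snd x))) \<in> borel_measurable (hyp_mu \<Otimes>\<^sub>M (hyp_mu \<Otimes>\<^sub>M hyp_mu))"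
      unfolding K_def by measurable
    have "(\<integral>\<^sup>+a. \<integral>\<^sup>+b. \<integral>\<^sup>+c. K a b c \<partial>hyp_mu \<partial>hyp_mu \<partial>hyp_mu) = (\<integral>\<^sup>+a. \<integral>\<^sup>+c. \<integral>\<^sup>+b. K a b c \<partial>hyp_mu \<partial>hyp_mu \<partial>hyp_mu)"
      by (intro nn_integral_cong HH.Fubini'[symmetric]) (unfold K_def, measurable)
    also have "\<dots> = (\<integral>\<^sup>+c. \<integral>\<^sup>+a. \<integral>\<^sup>+b. K a b c \<partial>hyp_mu \<partial>hyp_mu \<partial>hyp_mu)"
      by (intro HH.Fubini'[symmetric]) (unfold K_def, measurable)
    also have "\<dots> = (\<integral>\<^sup>+c. \<integral>\<^sup>+b. \<integral>\<^sup>+a. K a b c \<partial>hyp_mu \<partial>hyp_mu \<partial>hyp_mu)"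
      by (intro nn_integral_cong HH.Fubini') (unfold K_def, measurable)
    finally show "(\<integral>\<^sup>+p2. \<integral>\<^sup>+p3. \<integral>\<^sup>+p4. A p1 * A p2 * A p3 * A p4 * W (p1 - p2 - p3 + p4) \<partial>hyp_mu \<partial>hyp_mu \<partial>hyp_mu) =
      (\<integral>\<^sup>+p2. \<integral>\<^sup>+p3. \<integral>\<^sup>+p4. A p1 * A p2 * A p3 * A p4 * W (p1 + p2 - p3 - p4) \<partial>hyp_mu \<partial>hyp_mu \<partial>hyp_mu)"
      unfolding K_def by (simp add: algebra_simps)
  qed
  finally show ?thesis .
qed

definition test :: "(pt4 \<Rightarrow> real) \<Rightarrow> bool" where
  "test \<phi> \<longleftrightarrow> continuous_on UNIV \<phi> \<and> bounded {z. \<phi> z \<noteq> 0}"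

lemma test_shift: "test u \<Longrightarrow> test (\<lambda>z. u (z - y))"
proof -
  assume "test u"
  then have c: "continuous_on UNIV u" and b: "bounded {z. u z \<noteq> 0}" by (auto simp: test_def)
  have "continuous_on UNIV (\<lambda>z. u (z - y))"
    by (rule continuous_on_compose2[OF c]) (auto intro!: continuous_intros)
  moreover have "{z. u (z - y) \<noteq> 0} = (\<lambda>z. y + z) ` {z. u z \<noteq> 0}"
  proof (rule set_eqI, rule iffI)
    fix z assume "z \<in> {z. u (z - y) \<noteq> 0}"
    then show "z \<in> (\<lambda>z. y + z) ` {z. u z \<noteq> 0}" by (intro image_eqI[of _ _ "z - y"]) auto
  qed auto
  then have "bounded {z. u (z - y) \<noteq> 0}"
    using bounded_translation[OF b, of y] by simp
  ultimately show ?thesis by (simp add: test_def)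
qed

lemma test_meas[measurable]: "test u \<Longrightarrow> u \<in> borel_measurable borel"
  by (simp add: test_def borel_measurable_continuous_onI)

lemma conv_apply:
  assumes "is_conv_density F G" "test \<phi>"
  shows "integrable lborel (\<lambda>z. G z * complex_of_real (\<phi> z))"
    "integrable (hyp_mu \<Otimes>\<^sub>M hyp_mu) (\<lambda>pq. F (fst pq) * F (snd pq) * complex_of_real (\<phi> (fst pq + snd pq)))"
    "(LINT z|lborel. G z * complex_of_real (\<phi> z)) = integral\<^sup>L (hyp_mu \<Otimes>\<^sub>M hyp_mu) (\<lambda>pq. F (fst pq) * F (snd pq) * complex_of_real (\<phi> (fst pq + snd pq)))"
  using assms unfolding is_conv_density_def test_def by blast+

lemma cs_real:
  fixes x y z w :: real
  assumes "0 \<le> x" "0 \<le> y" "0 \<le> z" "0 \<le> w"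
  shows "x * w + z * y \<le> 2 * (sqrt ((x\<^sup>2 + z\<^sup>2) / 2) * sqrt ((y\<^sup>2 + w\<^sup>2) / 2))"
proof -
  have e1: "sqrt ((x\<^sup>2 + z\<^sup>2) / 2) * sqrt ((y\<^sup>2 + w\<^sup>2) / 2) = sqrt (((x\<^sup>2 + z\<^sup>2) * (y\<^sup>2 + w\<^sup>2)) / 4)"
    by (subst real_sqrt_mult[symmetric]) simp
  have e2: "sqrt (((x\<^sup>2 + z\<^sup>2) * (y\<^sup>2 + w\<^sup>2)) / 4) = sqrt ((x\<^sup>2 + z\<^sup>2) * (y\<^sup>2 + w\<^sup>2)) / 2"
    by (subst real_sqrt_divide) (simp add: real_sqrt_four)
  have "2 * (sqrt ((x\<^sup>2 + z\<^sup>2) / 2) * sqrt ((y\<^sup>2 + w\<^sup>2) / 2)) = sqrt ((x\<^sup>2 + z\<^sup>2) * (y\<^sup>2 + w\<^sup>2))"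
    unfolding e1 e2 by simp
  moreover have "(x * w + z * y)\<^sup>2 \<le> (x\<^sup>2 + z\<^sup>2) * (y\<^sup>2 + w\<^sup>2)"
  proof -
    have "0 \<le> (x * y - z * w)\<^sup>2" by simp
    then show ?thesis by (simp add: power2_eq_square algebra_simps)
  qed
  then have "x * w + z * y \<le> sqrt ((x\<^sup>2 + z\<^sup>2) * (y\<^sup>2 + w\<^sup>2))"
    using assms by (simp add: real_le_rsqrt)
  ultimately show ?thesis by simp
qed

lemma ennreal_double_cancel:
  fixes x y :: ennreal
  assumes "x + x \<le> y + y" shows "x \<le> y"
proof -
  have "2 * x \<le> 2 * y" using assms by (simp add: mult_2)
  then show ?thesis by (subst (asm) ennreal_mult_le_mult_iff) auto
qed

lemma nn_swap:
  assumes [measurable]: "G \<in> borel_measurable (hyp_mu \<Otimes>\<^sub>M hyp_mu)"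
  shows "(\<integral>\<^sup>+x. G (snd x, fst x) \<partial>(hyp_mu \<Otimes>\<^sub>M hyp_mu)) = integral\<^sup>N (hyp_mu \<Otimes>\<^sub>M hyp_mu) G"
proof -
  have "integral\<^sup>N (hyp_mu \<Otimes>\<^sub>M hyp_mu) G = integral\<^sup>N (distr (hyp_mu \<Otimes>\<^sub>M hyp_mu) (hyp_mu \<Otimes>\<^sub>M hyp_mu) (\<lambda>(x, y). (y, x))) G"
    using HH.distr_pair_swap by (rule arg_cong)
  also have "\<dots> = (\<integral>\<^sup>+x. G (snd x, fst x) \<partial>(hyp_mu \<Otimes>\<^sub>M hyp_mu))"
    by (subst nn_integral_distr) (auto simp: case_prod_beta)
  finally show ?thesis ..
qed

lemma f_meas:
  assumes "in_L2_hyp f" shows "f \<in> borel_measurable borel"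
  using assms unfolding in_L2_hyp_def by (simp add: measurable_cong_sets[OF sets_hyp_mu refl])

lemma conv_meas:
  assumes "is_conv_density F G" shows "G \<in> borel_measurable borel"
  using assms unfolding is_conv_density_def by simp

lemma norm_f_sharp: "norm (f_sharp f p) = sqrt (((norm (f p))\<^sup>2 + (norm (f (- p)))\<^sup>2) / 2)"
  unfolding f_sharp_def by simp

lemma uminus_borel_meas[measurable]: "(uminus :: 'a::real_normed_vector \<Rightarrow> 'a) \<in> borel_measurable borel"
  by (intro borel_measurable_continuous_onI continuous_intros)

lemma f_sharp_meas[measurable]:
  assumes [measurable]: "f \<in> borel_measurable borel"
  shows "f_sharp f \<in> borel_measurable borel"
  unfolding f_sharp_def[abs_def] by measurable

lemma star:
  fixes f g h :: "pt4 \<Rightarrow> complex" and u :: "pt4 \<Rightarrow> real"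
  assumes fm[measurable]: "f \<in> borel_measurable borel"
    and Hg: "is_conv_density f g" and Hh: "is_conv_density (f_sharp f) h"
    and tu: "test u" and u0: "\<And>z. 0 \<le> u z" and u1: "(\<integral>\<^sup>+z. ennreal (u z) \<partial>lborel) = 1"
  shows "(\<integral>\<^sup>+y. ennreal ((norm (LINT z|lborel. g z * complex_of_real (u (z - y))))\<^sup>2) \<partial>lborel) \<le> L2sq h"
proof -
  let ?M = "hyp_mu \<Otimes>\<^sub>M hyp_mu"
  have [measurable]: "u \<in> borel_measurable borel" using tu by (rule test_meas)
  have [measurable]: "h \<in> borel_measurable borel" using Hh by (rule conv_meas)
  define A where "A p = ennreal (norm (f p))" for p
  define U where "U z = ennreal (u z)" for z
  define Bf where "Bf p = ennreal (norm (f_sharp f p))" for p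
  have [measurable]: "A \<in> borel_measurable borel" "U \<in> borel_measurable borel" "Bf \<in> borel_measurable borel"
    unfolding A_def[abs_def] U_def[abs_def] Bf_def[abs_def] by measurable
  define V where "V y = (\<integral>\<^sup>+x. A (fst x) * A (snd x) * U (fst x + snd x - y) \<partial>?M)" for y
  define Vt where "Vt y = (\<integral>\<^sup>+x. A (fst x) * A (- snd x) * U (fst x + snd x - y) \<partial>?M)" for y
  define Vb where "Vb y = (\<integral>\<^sup>+x. Bf (fst x) * Bf (snd x) * U (fst x + snd x - y) \<partial>?M)" for y
  define Hy where "Hy y = (\<integral>\<^sup>+z. ennreal (norm (h z)) * U (z - y) \<partial>lborel)" for y

  have S1: "ennreal ((norm (LINT z|lborel. g z * complex_of_real (u (z - y))))\<^sup>2) \<le> (V y)\<^sup>2" for y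
  proof -
    have tv: "test (\<lambda>z. u (z - y))" using tu by (rule test_shift)
    note ca = conv_apply[OF Hg tv]
    have "ennreal (norm (LINT z|lborel. g z * complex_of_real (u (z - y))))
        = ennreal (norm (integral\<^sup>L ?M (\<lambda>pq. f (fst pq) * f (snd pq) * complex_of_real (u (fst pq + snd pq - y)))))"
      using ca(3) by simp
    also have "\<dots> \<le> (\<integral>\<^sup>+x. norm (f (fst x) * f (snd x) * complex_of_real (u (fst x + snd x - y))) \<partial>?M)"
      by (rule integral_norm_bound_ennreal[OF ca(2)])
    also have "\<dots> = V y"
      unfolding V_def A_def U_def
      by (rule nn_integral_cong) (simp add: norm_mult u0 ennreal_mult)
    finally have "ennreal (norm (LINT z|lborel. g z * complex_of_real (u (z - y)))) \<le> V y" .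
    then have "ennreal (norm (LINT z|lborel. g z * complex_of_real (u (z - y)))) ^ 2 \<le> (V y)\<^sup>2"
      by (rule power_mono) simp
    then show ?thesis by (simp add: ennreal_power)
  qed

  have S2: "(\<integral>\<^sup>+y. (V y)\<^sup>2 \<partial>lborel) = (\<integral>\<^sup>+y. (Vt y)\<^sup>2 \<partial>lborel)"
  proof -
    have "(\<integral>\<^sup>+y. (V y)\<^sup>2 \<partial>lborel) = (\<integral>\<^sup>+p1. \<integral>\<^sup>+p2. \<integral>\<^sup>+p3. \<integral>\<^sup>+p4. A p1 * A p2 * A p3 * A p4 * Wf U (p1 + p2 - p3 - p4) \<partial>hyp_mu \<partial>hyp_mu \<partial>hyp_mu \<partial>hyp_mu)"
      unfolding V_def by (rule square_expand) measurable
    also have "\<dots> = (\<integral>\<^sup>+p1. \<integral>\<^sup>+p2. \<integral>\<^sup>+p3. \<integral>\<^sup>+p4. A p1 * A (- p2) * A p3 * A (- p4) * Wf U (p1 + p2 - p3 - p4) \<partial>hyp_mu \<partial>hyp_mu \<partial>hyp_mu \<partial>hyp_mu)"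
      by (rule four_perm[symmetric]) measurable
    also have "\<dots> = (\<integral>\<^sup>+y. (Vt y)\<^sup>2 \<partial>lborel)"
      unfolding Vt_def using square_expand[of A "\<lambda>p. A (- p)" U] by simp
    finally show ?thesis .
  qed

  have S3: "Vt y \<le> Vb y" for y
  proof -
    have "Vt y = (\<integral>\<^sup>+x. A (snd x) * A (- fst x) * U (snd x + fst x - y) \<partial>?M)"
      unfolding Vt_def
      using nn_swap[of "\<lambda>x. A (fst x) * A (- snd x) * U (fst x + snd x - y)"] by simp
    then have "Vt y + Vt y = (\<integral>\<^sup>+x. A (fst x) * A (- snd x) * U (fst x + snd x - y) \<partial>?M) + (\<integral>\<^sup>+x. A (snd x) * A (- fst x) * U (snd x + fst x - y) \<partial>?M)"
      unfolding Vt_def by simp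
    also have "\<dots> = (\<integral>\<^sup>+x. A (fst x) * A (- snd x) * U (fst x + snd x - y) + A (snd x) * A (- fst x) * U (snd x + fst x - y) \<partial>?M)"
      by (rule nn_integral_add[symmetric]) measurable
    also have "\<dots> \<le> (\<integral>\<^sup>+x. Bf (fst x) * Bf (snd x) * U (fst x + snd x - y) + Bf (fst x) * Bf (snd x) * U (fst x + snd x - y) \<partial>?M)"
    proof (rule nn_integral_mono)
      fix x :: "pt4 \<times> pt4"
      obtain p q where x: "x = (p, q)" by (cases x)
      have "norm (f p) * norm (f (- q)) + norm (f (- p)) * norm (f q)
         \<le> 2 * (norm (f_sharp f p) * norm (f_sharp f q))"
        unfolding norm_f_sharp by (rule cs_real) auto
      then have "ennreal ((norm (f p) * norm (f (- q)) + norm (f (- p)) * norm (f q)) * u (p + q - y))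
          \<le> ennreal ((2 * (norm (f_sharp f p) * norm (f_sharp f q))) * u (p + q - y))"
        by (intro ennreal_leI mult_right_mono u0)
      then show "A (fst x) * A (- snd x) * U (fst x + snd x - y) + A (snd x) * A (- fst x) * U (snd x + fst x - y)
          \<le> Bf (fst x) * Bf (snd x) * U (fst x + snd x - y) + Bf (fst x) * Bf (snd x) * U (fst x + snd x - y)"
      proof -
        have L: "A p * A (- q) * U (p + q - y) + A q * A (- p) * U (q + p - y) = ennreal ((norm (f p) * norm (f (- q)) + norm (f (- p)) * norm (f q)) * u (p + q - y))"
        proof -
          have qp: "q + p - y = p + q - y" by (simp add: add.commute)
          have e1: "ennreal (norm (f p) * norm (f (- q)) * u (p + q - y)) = A p * A (- q) * U (p + q - y)"
            unfolding A_def U_def by (simp add: ennreal_mult u0)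
          have e2: "ennreal (norm (f (- p)) * norm (f q) * u (p + q - y)) = A q * A (- p) * U (q + p - y)"
            unfolding A_def U_def qp by (simp add: ennreal_mult u0 mult.commute)
          have "ennreal ((norm (f p) * norm (f (- q)) + norm (f (- p)) * norm (f q)) * u (p + q - y))
             = ennreal (norm (f p) * norm (f (- q)) * u (p + q - y)) + ennreal (norm (f (- p)) * norm (f q) * u (p + q - y))"
            by (simp only: distrib_right) (rule ennreal_plus; simp add: u0)
          then show ?thesis unfolding e1 e2 by simp
        qed
        have R: "Bf p * Bf q * U (p + q - y) + Bf p * Bf q * U (p + q - y) = ennreal ((2 * (norm (f_sharp f p) * norm (f_sharp f q))) * u (p + q - y))"
        proof -
          have e1: "ennreal (norm (f_sharp f p) * norm (f_sharp f q) * u (p + q - y)) = Bf p * Bf q * U (p + q - y)"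
            unfolding Bf_def U_def by (simp add: ennreal_mult u0)
          have "ennreal ((2 * (norm (f_sharp f p) * norm (f_sharp f q))) * u (p + q - y))
             = ennreal (norm (f_sharp f p) * norm (f_sharp f q) * u (p + q - y)) + ennreal (norm (f_sharp f p) * norm (f_sharp f q) * u (p + q - y))"
            by (simp only: mult_2 distrib_right) (rule ennreal_plus; simp add: u0)
          then show ?thesis unfolding e1 by simp
        qed
        show ?thesis using \<open>ennreal _ \<le> ennreal _\<close> unfolding x by (simp only: fst_conv snd_conv L R)
      qed
    qed
    also have "\<dots> = Vb y + Vb y"
      unfolding Vb_def by (rule nn_integral_add) measurable
    finally show ?thesis by (rule ennreal_double_cancel)
  qed

  have S4: "Vb y \<le> Hy y" for y
  proof -
    have tv: "test (\<lambda>z. u (z - y))" using tu by (rule test_shift)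
    note ca = conv_apply[OF Hh tv]
    define Fb where "Fb x = f_sharp f (fst x) * f_sharp f (snd x) * complex_of_real (u (fst x + snd x - y))" for x
    have Fbi: "integrable ?M Fb" using ca(2) unfolding Fb_def .
    have Fbr: "Fb x = complex_of_real (norm (Fb x))" for x
      unfolding Fb_def f_sharp_def by (simp add: norm_mult u0)
    have "Vb y = (\<integral>\<^sup>+x. ennreal (norm (Fb x)) \<partial>?M)"
      unfolding Vb_def Bf_def U_def Fb_def
      by (rule nn_integral_cong) (simp add: norm_mult u0 ennreal_mult)
    also have "\<dots> = ennreal (integral\<^sup>L ?M (\<lambda>x. norm (Fb x)))"
      by (rule nn_integral_eq_integral) (auto intro: integrable_norm Fbi)
    also have "integral\<^sup>L ?M (\<lambda>x. norm (Fb x)) = norm (integral\<^sup>L ?M Fb)"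
    proof -
      have "integral\<^sup>L ?M Fb = integral\<^sup>L ?M (\<lambda>x. complex_of_real (norm (Fb x)))"
        by (rule Bochner_Integration.integral_cong[OF refl Fbr])
      also have "\<dots> = complex_of_real (integral\<^sup>L ?M (\<lambda>x. norm (Fb x)))"
        by (rule integral_complex_of_real)
      finally show ?thesis by simp
    qed
    also have "integral\<^sup>L ?M Fb = (LINT z|lborel. h z * complex_of_real (u (z - y)))"
      using ca(3) unfolding Fb_def by simp
    also have "ennreal (norm (LINT z|lborel. h z * complex_of_real (u (z - y)))) \<le> (\<integral>\<^sup>+z. norm (h z * complex_of_real (u (z - y))) \<partial>lborel)"
      by (rule integral_norm_bound_ennreal[OF ca(1)])
    also have "\<dots> = Hy y"
      unfolding Hy_def U_def
      by (rule nn_integral_cong) (simp add: norm_mult u0 ennreal_mult)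
    finally show ?thesis .
  qed

  have S5: "(Hy y)\<^sup>2 \<le> (\<integral>\<^sup>+z. ennreal ((norm (h z))\<^sup>2) * U (z - y) \<partial>lborel)" for y
  proof -
    have "(Hy y)\<^sup>2 = (\<integral>\<^sup>+z. ennreal (norm (h z) * sqrt (u (z - y))) * ennreal (sqrt (u (z - y))) \<partial>lborel)\<^sup>2"
      unfolding Hy_def U_def
    proof (rule arg_cong[where f="\<lambda>x. x\<^sup>2"], rule nn_integral_cong)
      fix z
      have sq: "ennreal (sqrt (u (z - y))) * ennreal (sqrt (u (z - y))) = ennreal (u (z - y))"
        by (subst ennreal_mult[symmetric]) (auto simp: u0)
      show "ennreal (norm (h z)) * ennreal (u (z - y)) = ennreal (norm (h z) * sqrt (u (z - y))) * ennreal (sqrt (u (z - y)))"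
        by (simp add: ennreal_mult u0 mult.assoc sq)
    qed
    also have "\<dots> \<le> (\<integral>\<^sup>+z. (ennreal (norm (h z) * sqrt (u (z - y))))\<^sup>2 \<partial>lborel) * (\<integral>\<^sup>+z. (ennreal (sqrt (u (z - y))))\<^sup>2 \<partial>lborel)"
      by (rule Cauchy_Schwarz_nn_integral) measurable
    also have "(\<integral>\<^sup>+z. (ennreal (norm (h z) * sqrt (u (z - y))))\<^sup>2 \<partial>lborel) = (\<integral>\<^sup>+z. ennreal ((norm (h z))\<^sup>2) * U (z - y) \<partial>lborel)"
      unfolding U_def
      by (rule nn_integral_cong) (simp add: ennreal_power ennreal_mult[symmetric] u0 power_mult_distrib)
    also have "(\<integral>\<^sup>+z. (ennreal (sqrt (u (z - y))))\<^sup>2 \<partial>lborel) = (\<integral>\<^sup>+z. U (z + (- y)) \<partial>lborel)"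
      unfolding U_def
      by (rule nn_integral_cong) (simp add: ennreal_power u0)
    also have "\<dots> = 1"
      using nn_integral_translate_lborel[of U "- y"] u1 unfolding U_def by simp
    finally show ?thesis by simp
  qed

  have S6: "(\<integral>\<^sup>+y. \<integral>\<^sup>+z. ennreal ((norm (h z))\<^sup>2) * U (z - y) \<partial>lborel \<partial>lborel) = L2sq h"
  proof -
    have "(\<integral>\<^sup>+y. \<integral>\<^sup>+z. ennreal ((norm (h z))\<^sup>2) * U (z - y) \<partial>lborel \<partial>lborel)
        = (\<integral>\<^sup>+z. \<integral>\<^sup>+y. ennreal ((norm (h z))\<^sup>2) * U (z - y) \<partial>lborel \<partial>lborel)"
      by (rule lborel_pair.Fubini') measurable
    also have "\<dots> = (\<integral>\<^sup>+z. ennreal ((norm (h z))\<^sup>2) * (\<integral>\<^sup>+y. U (z - y) \<partial>lborel) \<partial>lborel)"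
      by (rule nn_integral_cong) (rule nn_integral_cmult, measurable)
    also have "\<dots> = (\<integral>\<^sup>+z. ennreal ((norm (h z))\<^sup>2) \<partial>lborel)"
      using nn_integral_reflect_lborel[of U] u1 unfolding U_def by simp
    finally show ?thesis unfolding L2sq_def .
  qed

  have "(\<integral>\<^sup>+y. ennreal ((norm (LINT z|lborel. g z * complex_of_real (u (z - y))))\<^sup>2) \<partial>lborel) \<le> (\<integral>\<^sup>+y. (V y)\<^sup>2 \<partial>lborel)"
    by (rule nn_integral_mono) (rule S1)
  also have "\<dots> = (\<integral>\<^sup>+y. (Vt y)\<^sup>2 \<partial>lborel)" by (rule S2)
  also have "\<dots> \<le> (\<integral>\<^sup>+y. (Hy y)\<^sup>2 \<partial>lborel)"
    by (rule nn_integral_mono) (rule power_mono, rule order_trans[OF S3 S4], simp)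
  also have "\<dots> \<le> (\<integral>\<^sup>+y. \<integral>\<^sup>+z. ennreal ((norm (h z))\<^sup>2) * U (z - y) \<partial>lborel \<partial>lborel)"
    by (rule nn_integral_mono) (rule S5)
  also have "\<dots> = L2sq h" by (rule S6)
  finally show ?thesis .
qed

definition bump :: "real \<Rightarrow> pt4 \<Rightarrow> real" where
  "bump R z = max 0 (min 1 (R + 1 - norm z))"

lemma cball_borel[measurable]: "cball (c::'a::metric_space) r \<in> sets borel"
  by (simp add: borel_closed)

lemma ball_borel[measurable]: "ball (c::'a::metric_space) r \<in> sets borel"
  by (simp add: borel_open)

lemma bump_cont: "continuous_on UNIV (bump R)"
  unfolding bump_def[abs_def] by (intro continuous_intros)

lemma bump_props: "0 \<le> bump R z" "bump R z \<le> 1" "norm z \<le> R \<Longrightarrow> bump R z = 1" "R + 1 \<le> norm z \<Longrightarrow> bump R z = 0"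
  unfolding bump_def by auto

lemma bump_test: "test (bump R)"
proof -
  have "{z. bump R z \<noteq> 0} \<subseteq> cball 0 (R + 1)"
  proof
    fix z assume "z \<in> {z. bump R z \<noteq> 0}"
    then have "\<not> R + 1 \<le> norm z" using bump_props(4)[of R z] by auto
    then show "z \<in> cball 0 (R + 1)" by (simp add: dist_norm)
  qed
  then show ?thesis using bump_cont by (auto simp: test_def intro: bounded_subset)
qed

lemma loc_int:
  assumes "is_conv_density F G"
  shows "integrable lborel (\<lambda>z. norm (G z) * indicator (cball 0 R) z)"
proof -
  have [measurable]: "G \<in> borel_measurable borel" using assms by (rule conv_meas)
  have "integrable lborel (\<lambda>z. G z * complex_of_real (bump R z))"
    using conv_apply(1)[OF assms bump_test] .
  then have i: "integrable lborel (\<lambda>z. norm (G z * complex_of_real (bump R z)))" by (rule integrable_norm)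
  show ?thesis
  proof (rule Bochner_Integration.integrable_bound[OF i])
    show "(\<lambda>z. norm (G z) * indicator (cball 0 R) z) \<in> borel_measurable lborel" by measurable
    show "AE x in lborel. norm (norm (G x) * indicator (cball 0 R) x) \<le> norm (norm (G x * complex_of_real (bump R x)))"
      by (rule AE_I2) (auto simp: indicator_def norm_mult bump_props dist_norm)
  qed
qed

lemma emeasure_ball_pos: "0 < r \<Longrightarrow> 0 < emeasure lborel (ball (c::'a::euclidean_space) r)"
proof -
  assume r: "0 < r"
  have "measure lborel (ball c r) = measure lebesgue (ball c r)" by simp
  then have "0 < measure lborel (ball c r)" using content_ball_pos[OF r, of c] by simp
  then show ?thesis
    using emeasure_lborel_ball_finite[of c r] by (simp add: emeasure_eq_ennreal_measure)
qed

lemma mollifier: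
  assumes r: "0 < r"
  obtains u :: "pt4 \<Rightarrow> real" where "test u" "\<And>z. 0 \<le> u z" "(\<integral>\<^sup>+z. ennreal (u z) \<partial>lborel) = 1"
    "\<And>z. r \<le> norm z \<Longrightarrow> u z = 0" "integrable lborel u" "integral\<^sup>L lborel u = 1"
proof -
  define v where "v z = max 0 (r - norm z)" for z :: pt4
  have vc: "continuous_on UNIV v" unfolding v_def[abs_def] by (intro continuous_intros)
  have [measurable]: "v \<in> borel_measurable borel" using vc by (rule borel_measurable_continuous_onI)
  have v0: "0 \<le> v z" for z by (simp add: v_def)
  have vz: "r \<le> norm z \<Longrightarrow> v z = 0" for z by (simp add: v_def)
  define c where "c = (\<integral>\<^sup>+z. ennreal (v z) \<partial>lborel)"
  have "c \<le> (\<integral>\<^sup>+z. ennreal r * indicator (cball 0 r) (z::pt4) \<partial>lborel)"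
    unfolding c_def by (rule nn_integral_mono) (auto simp: v_def indicator_def dist_norm intro!: ennreal_leI)
  also have "\<dots> < \<infinity>"
    using emeasure_lborel_cball_finite[of "0::pt4" r] by (simp add: nn_integral_cmult_indicator ennreal_mult_less_top)
  finally have cfin: "c < \<infinity>" .
  have "(\<integral>\<^sup>+z. ennreal (r/2) * indicator (ball 0 (r/2)) (z::pt4) \<partial>lborel) \<le> c"
    unfolding c_def
  proof (rule nn_integral_mono)
    fix z :: pt4
    have "norm z \<ge> 0" by simp
    then have "norm z * 2 < r \<Longrightarrow> norm z \<le> r" by linarith
    then show "ennreal (r / 2) * indicator (ball 0 (r / 2)) z \<le> ennreal (v z)"
      by (auto simp: v_def indicator_def dist_norm max_def intro!: ennreal_leI)
  qed
  moreover have "0 < (\<integral>\<^sup>+z. ennreal (r/2) * indicator (ball 0 (r/2)) (z::pt4) \<partial>lborel)"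
    using emeasure_ball_pos[of "r/2" "0::pt4"] r by (simp add: nn_integral_cmult_indicator ennreal_zero_less_mult_iff)
  ultimately have cpos: "0 < c" by simp
  define c' where "c' = enn2real c"
  have c': "c = ennreal c'" "0 < c'" using cfin cpos unfolding c'_def
    by (auto simp: enn2real_positive_iff less_top)
  define u where "u z = v z / c'" for z
  have "test u"
  proof -
    have "{z. u z \<noteq> 0} \<subseteq> cball 0 r"
    proof
      fix z assume "z \<in> {z. u z \<noteq> 0}"
      then have "\<not> r \<le> norm z" using vz[of z] by (auto simp: u_def)
      then show "z \<in> cball 0 r" by (simp add: dist_norm)
    qed
    moreover have "continuous_on UNIV u" unfolding u_def[abs_def] using vc c' by (intro continuous_intros) auto
    ultimately show ?thesis by (auto simp: test_def intro: bounded_subset)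
  qed
  moreover have u0: "0 \<le> u z" for z using v0 c' by (simp add: u_def)
  moreover have u1: "(\<integral>\<^sup>+z. ennreal (u z) \<partial>lborel) = 1"
  proof -
    have "(\<integral>\<^sup>+z. ennreal (u z) \<partial>lborel) = (\<integral>\<^sup>+z. ennreal (1 / c') * ennreal (v z) \<partial>lborel)"
      using c' v0 by (intro nn_integral_cong) (simp add: u_def ennreal_mult[symmetric])
    also have "\<dots> = ennreal (1 / c') * c" unfolding c_def by (rule nn_integral_cmult) measurable
    also have "\<dots> = 1" using c' by (simp add: ennreal_mult[symmetric])
    finally show ?thesis .
  qed
  moreover have "r \<le> norm z \<Longrightarrow> u z = 0" for z using vz by (simp add: u_def)
  moreover have "integrable lborel u"
    using u1 u0 \<open>test u\<close> by (intro integrableI_nonneg) auto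
  moreover have "integral\<^sup>L lborel u = 1"
  proof -
    have "ennreal (integral\<^sup>L lborel u) = 1"
      using nn_integral_eq_integral[OF \<open>integrable lborel u\<close>] u0 u1 by simp
    then show ?thesis
      using u0 by (metis ennreal_1 ennreal_inj integral_nonneg_AE AE_I2 zero_le_one)
  qed
  ultimately show ?thesis using that by blast
qed

lemma moll_shift:
  assumes tu: "test u" and u0: "\<And>z. 0 \<le> u z" and u1: "(\<integral>\<^sup>+z. ennreal (u z) \<partial>lborel) = 1"
  shows "(\<integral>\<^sup>+y. ennreal (u (z - y)) \<partial>lborel) = 1" "integrable lborel (\<lambda>y. u (z - y))" "(LINT y|lborel. u (z - y)) = 1"
proof -
  have [measurable]: "u \<in> borel_measurable borel" using tu by (rule test_meas)
  show n: "(\<integral>\<^sup>+y. ennreal (u (z - y)) \<partial>lborel) = 1"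
    using nn_integral_reflect_lborel[of "\<lambda>x. ennreal (u x)" z] u1 by simp
  show "integrable lborel (\<lambda>y. u (z - y))"
    using n u0 by (intro integrableI_nonneg) auto
  have "(LINT y|lborel. u (z - y)) = enn2real (\<integral>\<^sup>+y. ennreal (u (z - y)) \<partial>lborel)"
    using u0 by (intro integral_eq_nn_integral) auto
  then show "(LINT y|lborel. u (z - y)) = 1" using n by simp
qed

lemma fubini_step:
  fixes G :: "pt4 \<Rightarrow> complex" and \<phi> :: "pt4 \<Rightarrow> complex"
  assumes Gm[measurable]: "G \<in> borel_measurable borel"
    and Gloc: "\<And>R. integrable lborel (\<lambda>z. norm (G z) * indicator (cball 0 R) z)"
    and tu: "test u" and u0: "\<And>z. 0 \<le> u z" and u1: "(\<integral>\<^sup>+z. ennreal (u z) \<partial>lborel) = 1"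
    and usupp: "\<And>z. 1 \<le> norm z \<Longrightarrow> u z = 0"
    and \<phi>m[measurable]: "\<phi> \<in> borel_measurable borel" and \<phi>B: "\<And>y. norm (\<phi> y) \<le> B"
    and \<phi>supp: "\<And>y. R < norm y \<Longrightarrow> \<phi> y = 0"
  shows "(LINT y|lborel. (LINT z|lborel. G z * complex_of_real (u (z - y))) * \<phi> y)
       = (LINT z|lborel. G z * (LINT y|lborel. complex_of_real (u (z - y)) * \<phi> y))"
proof -
  have [measurable]: "u \<in> borel_measurable borel" using tu by (rule test_meas)
  define K where "K y z = G z * complex_of_real (u (z - y)) * \<phi> y" for y z
  have Km[measurable]: "(\<lambda>(y, z). K y z) \<in> borel_measurable (lborel \<Otimes>\<^sub>M lborel)"
    unfolding K_def by measurable
  have B0: "0 \<le> B" using \<phi>B[of 0] norm_ge_zero order_trans by blast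
  define w where "w z = B * (norm (G z) * indicator (cball 0 (R + 1)) z)" for z
  have wi: "integrable lborel w" unfolding w_def using Gloc by simp
  have [measurable]: "w \<in> borel_measurable borel" unfolding w_def by measurable
  have w0: "0 \<le> w z" for z unfolding w_def using B0 by simp
  have bound: "norm (K y z) \<le> w z * u (z - y)" for y z
  proof (cases "\<phi> y = 0 \<or> u (z - y) = 0")
    case True
    have "0 \<le> w z * u (z - y)" using w0[of z] u0[of "z - y"] by simp
    with True show ?thesis by (auto simp: K_def)
  next
    case False
    have "norm y \<le> R" using False \<phi>supp[of y] by (meson not_le)
    moreover have "norm (z - y) < 1" using False usupp[of "z - y"] by (meson not_le)
    ultimately have "norm z \<le> R + 1" using norm_triangle_ineq[of "z - y" y] by simp
    then have "w z = B * norm (G z)" by (simp add: w_def indicator_def dist_norm)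
    moreover have "norm (G z) * (norm (\<phi> y) * u (z - y)) \<le> norm (G z) * (B * u (z - y))"
      using \<phi>B[of y] u0[of "z - y"] by (intro mult_left_mono mult_right_mono) auto
    ultimately show ?thesis using u0[of "z - y"]
      by (simp add: K_def norm_mult mult_ac)
  qed
  have "integrable (lborel \<Otimes>\<^sub>M lborel) (\<lambda>(y, z). K y z)"
  proof (rule integrableI_bounded)
    show "(\<lambda>(y, z). K y z) \<in> borel_measurable (lborel \<Otimes>\<^sub>M lborel)" by (rule Km)
    have "(\<integral>\<^sup>+x. ennreal (norm (case x of (y, z) \<Rightarrow> K y z)) \<partial>(lborel \<Otimes>\<^sub>M lborel))
        = (\<integral>\<^sup>+z. \<integral>\<^sup>+y. ennreal (norm (K y z)) \<partial>lborel \<partial>lborel)"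
      by (rule lborel_pair.nn_integral_snd[symmetric, where f="\<lambda>x. ennreal (norm (case x of (y, z) \<Rightarrow> K y z))", simplified]) measurable
    also have "\<dots> \<le> (\<integral>\<^sup>+z. \<integral>\<^sup>+y. ennreal (w z) * ennreal (u (z - y)) \<partial>lborel \<partial>lborel)"
      using bound w0 u0 by (intro nn_integral_mono) (simp add: ennreal_mult[symmetric] ennreal_leI)
    also have "\<dots> = (\<integral>\<^sup>+z. ennreal (w z) * (\<integral>\<^sup>+y. ennreal (u (z - y)) \<partial>lborel) \<partial>lborel)"
      by (intro nn_integral_cong nn_integral_cmult) measurable
    also have "\<dots> = (\<integral>\<^sup>+z. ennreal (w z) \<partial>lborel)"
      using moll_shift(1)[OF tu u0 u1] by simp
    also have "\<dots> < \<infinity>" using wi w0 by (simp add: integrable_iff_bounded)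
    finally show "(\<integral>\<^sup>+x. ennreal (norm (case x of (y, z) \<Rightarrow> K y z)) \<partial>(lborel \<Otimes>\<^sub>M lborel)) < \<infinity>" .
  qed
  then have F: "(LINT z|lborel. LINT y|lborel. K y z) = (LINT y|lborel. LINT z|lborel. K y z)"
    by (rule lborel_pair.Fubini_integral)
  have "(LINT y|lborel. (LINT z|lborel. G z * complex_of_real (u (z - y))) * \<phi> y) = (LINT y|lborel. LINT z|lborel. K y z)"
    unfolding K_def by (simp add: integral_mult_left_zero)
  also have "\<dots> = (LINT z|lborel. LINT y|lborel. K y z)" using F by simp
  also have "\<dots> = (LINT z|lborel. G z * (LINT y|lborel. complex_of_real (u (z - y)) * \<phi> y))"
    unfolding K_def by (simp add: integral_mult_right_zero mult.assoc)
  finally show ?thesis .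
qed

lemma mollifier_seq:
  obtains U :: "nat \<Rightarrow> pt4 \<Rightarrow> real" where "\<And>k. test (U k)" "\<And>k z. 0 \<le> U k z"
    "\<And>k. (\<integral>\<^sup>+z. ennreal (U k z) \<partial>lborel) = 1"
    "\<And>k z. 1 / Suc k \<le> norm z \<Longrightarrow> U k z = 0"
proof -
  have "\<forall>k. \<exists>u. test u \<and> (\<forall>z. 0 \<le> u z) \<and> (\<integral>\<^sup>+z. ennreal (u z) \<partial>lborel) = 1 \<and> (\<forall>z. 1 / Suc k \<le> norm z \<longrightarrow> u z = 0)"
  proof
    fix k :: nat
    obtain u where "test u" "\<And>z. 0 \<le> u z" "(\<integral>\<^sup>+z. ennreal (u z) \<partial>lborel) = 1"
      "\<And>z. 1 / Suc k \<le> norm z \<Longrightarrow> u z = 0"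
      by (rule mollifier[of "1 / Suc k"]) simp_all
    then show "\<exists>u. test u \<and> (\<forall>z. 0 \<le> u z) \<and> (\<integral>\<^sup>+z. ennreal (u z) \<partial>lborel) = 1 \<and> (\<forall>z. 1 / Suc k \<le> norm z \<longrightarrow> u z = 0)"
      by blast
  qed
  then obtain U where "\<forall>k. test (U k) \<and> (\<forall>z. 0 \<le> U k z) \<and> (\<integral>\<^sup>+z. ennreal (U k z) \<partial>lborel) = 1 \<and> (\<forall>z. 1 / Suc k \<le> norm z \<longrightarrow> U k z = 0)"
    by metis
  then show ?thesis using that by blast
qed

lemma cont_bounded:
  fixes \<phi> :: "pt4 \<Rightarrow> complex"
  assumes "continuous_on UNIV \<phi>" "bounded {z. \<phi> z \<noteq> 0}"
  obtains R B where "0 \<le> R" "0 \<le> B" "\<And>y. norm (\<phi> y) \<le> B" "\<And>y. R < norm y \<Longrightarrow> \<phi> y = 0"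
proof -
  from assms(2) obtain R where R0: "\<forall>x\<in>{z. \<phi> z \<noteq> 0}. norm x \<le> R" unfolding bounded_iff ..
  have R: "norm x \<le> R" if "x \<in> {z. \<phi> z \<noteq> 0}" for x using R0 that by (rule bspec)
  define R' where "R' = max 0 R"
  have R': "\<phi> y = 0" if "R' < norm y" for y
  proof (rule ccontr)
    assume "\<phi> y \<noteq> 0"
    then have "norm y \<le> R" using R[of y] by simp
    then show False using that by (simp add: R'_def)
  qed
  have "compact (\<phi> ` cball 0 R')"
    by (rule compact_continuous_image[OF continuous_on_subset[OF assms(1)]]) auto
  then have "bounded (\<phi> ` cball 0 R')" by (rule compact_imp_bounded)
  then obtain B where B0: "\<forall>x\<in>\<phi> ` cball 0 R'. norm x \<le> B"
    unfolding bounded_iff ..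
  have B: "norm x \<le> B" if "x \<in> \<phi> ` cball 0 R'" for x using B0 that by (rule bspec)
  define B' where "B' = max 0 B"
  have "norm (\<phi> y) \<le> B'" for y
  proof (cases "norm y \<le> R'")
    case True
    then have "\<phi> y \<in> \<phi> ` cball 0 R'" by (simp add: dist_norm)
    then show ?thesis using B[of "\<phi> y"] by (simp add: B'_def)
  next
    case False then show ?thesis using R'[of y] by (simp add: B'_def)
  qed
  moreover have "0 \<le> R'" "0 \<le> B'" by (simp_all add: R'_def B'_def)
  ultimately show ?thesis by (intro that[of R' B'] R')
qed

lemma cont_bound:
  fixes f g h \<phi> :: "pt4 \<Rightarrow> complex"
  assumes fm[measurable]: "f \<in> borel_measurable borel"
    and Hg: "is_conv_density f g" and Hh: "is_conv_density (f_sharp f) h"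
    and \<phi>c: "continuous_on UNIV \<phi>" and \<phi>b: "bounded {z. \<phi> z \<noteq> 0}"
  shows "ennreal ((norm (LINT z|lborel. g z * \<phi> z))\<^sup>2) \<le> L2sq h * (\<integral>\<^sup>+z. ennreal ((norm (\<phi> z))\<^sup>2) \<partial>lborel)"
proof -
  obtain R B where R0: "0 \<le> R" and B0: "0 \<le> B" and \<phi>B: "\<And>y. norm (\<phi> y) \<le> B"
    and \<phi>supp: "\<And>y. R < norm y \<Longrightarrow> \<phi> y = 0"
    using cont_bounded[OF \<phi>c \<phi>b] by metis
  obtain U where Ut: "\<And>k. test (U k)" and U0: "\<And>k z. 0 \<le> U k z"
    and U1: "\<And>k. (\<integral>\<^sup>+z. ennreal (U k z) \<partial>lborel) = 1"
    and Us: "\<And>k z. 1 / Suc k \<le> norm z \<Longrightarrow> U k z = 0"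
    using mollifier_seq by metis
  have [measurable]: "g \<in> borel_measurable borel" using Hg by (rule conv_meas)
  have [measurable]: "\<phi> \<in> borel_measurable borel" using \<phi>c by (rule borel_measurable_continuous_onI)
  have Um[measurable]: "U k \<in> borel_measurable borel" for k using Ut by (rule test_meas)
  have gloc: "integrable lborel (\<lambda>z. norm (g z) * indicator (cball 0 R') z)" for R' by (rule loc_int[OF Hg])
  define \<psi> where "\<psi> k z = (LINT y|lborel. complex_of_real (U k (z - y)) * \<phi> y)" for k z
  have \<psi>m[measurable]: "\<psi> k \<in> borel_measurable borel" for k
    unfolding \<psi>_def by measurable

  have Fint: "integrable lborel (\<lambda>y. complex_of_real (U k (z - y)) * \<phi> y)" for k z
  proof (rule Bochner_Integration.integrable_bound)
    show "integrable lborel (\<lambda>y. B * U k (z - y))"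
      using moll_shift(2)[OF Ut U0 U1] by simp
    show "(\<lambda>y. complex_of_real (U k (z - y)) * \<phi> y) \<in> borel_measurable lborel" by measurable
    show "AE y in lborel. norm (complex_of_real (U k (z - y)) * \<phi> y) \<le> norm (B * U k (z - y))"
    proof (rule AE_I2)
      fix y
      have "norm (\<phi> y) * U k (z - y) \<le> B * U k (z - y)" by (rule mult_right_mono[OF \<phi>B U0])
      then show "norm (complex_of_real (U k (z - y)) * \<phi> y) \<le> norm (B * U k (z - y))"
        using U0[of k "z - y"] B0 by (simp add: norm_mult abs_mult mult.commute)
    qed
  qed

  have \<psi>B: "norm (\<psi> k z) \<le> B" for k z
  proof -
    have "ennreal (norm (\<psi> k z)) \<le> (\<integral>\<^sup>+y. norm (complex_of_real (U k (z - y)) * \<phi> y) \<partial>lborel)"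
      unfolding \<psi>_def by (rule integral_norm_bound_ennreal[OF Fint])
    also have "\<dots> \<le> (\<integral>\<^sup>+y. ennreal B * ennreal (U k (z - y)) \<partial>lborel)"
    proof (rule nn_integral_mono)
      fix y
      have "norm (\<phi> y) * U k (z - y) \<le> B * U k (z - y)" by (rule mult_right_mono[OF \<phi>B U0])
      then show "ennreal (norm (complex_of_real (U k (z - y)) * \<phi> y)) \<le> ennreal B * ennreal (U k (z - y))"
        using U0[of k "z - y"] B0 by (simp add: norm_mult ennreal_mult[symmetric] mult.commute ennreal_leI)
    qed
    also have "\<dots> = ennreal B * (\<integral>\<^sup>+y. ennreal (U k (z - y)) \<partial>lborel)"
      by (rule nn_integral_cmult) measurable
    also have "\<dots> = ennreal B" using moll_shift(1)[OF Ut U0 U1] by simp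
    finally show ?thesis using B0 by simp
  qed

  have \<psi>supp: "\<psi> k z = 0" if "R + 1 < norm z" for k z
  proof -
    have "complex_of_real (U k (z - y)) * \<phi> y = 0" for y
    proof (cases "R < norm y")
      case True then show ?thesis using \<phi>supp[of y] by simp
    next
      case False
      have "norm z \<le> norm (z - y) + norm y" using norm_triangle_ineq[of "z - y" y] by simp
      then have "1 \<le> norm (z - y)" using False that by simp
      moreover have "1 / real (Suc k) \<le> 1" by simp
      ultimately have "1 / real (Suc k) \<le> norm (z - y)" by linarith
      then show ?thesis using Us[of k "z - y"] by simp
    qed
    then have "(\<lambda>y. complex_of_real (U k (z - y)) * \<phi> y) = (\<lambda>y. 0)" by (rule ext)
    then show ?thesis unfolding \<psi>_def by simp
  qed

  have conv: "(\<lambda>k. \<psi> k z) \<longlonglongrightarrow> \<phi> z" for z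
  proof (rule tendstoI)
    fix e :: real assume e: "0 < e"
    obtain d where d: "0 < d" and dd: "\<And>y. dist y z < d \<Longrightarrow> dist (\<phi> y) (\<phi> z) < e / 2"
      using \<phi>c e unfolding continuous_on_iff by (metis UNIV_I half_gt_zero)
    obtain N :: nat where N: "inverse (real (Suc N)) < d" using reals_Archimedean[OF d] by blast
    show "\<forall>\<^sub>F k in sequentially. dist (\<psi> k z) (\<phi> z) < e"
    proof (rule eventually_sequentiallyI[of N])
      fix k assume kN: "N \<le> k"
      have kd: "1 / real (Suc k) < d"
      proof -
        have "1 / real (Suc k) \<le> 1 / real (Suc N)" using kN by (simp add: frac_le)
        then show ?thesis using N by (simp add: inverse_eq_divide)
      qed
      have i1: "integrable lborel (\<lambda>y. complex_of_real (U k (z - y)) * \<phi> z)"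
        using moll_shift(2)[OF Ut U0 U1, of k z] by (intro integrable_mult_left integrable_of_real)
      have "(LINT y|lborel. complex_of_real (U k (z - y)) * \<phi> z) = \<phi> z"
        using moll_shift(3)[OF Ut U0 U1, of k z] by (simp add: integral_mult_left_zero)
      then have "\<psi> k z - \<phi> z = (LINT y|lborel. complex_of_real (U k (z - y)) * \<phi> y - complex_of_real (U k (z - y)) * \<phi> z)"
        unfolding \<psi>_def using Fint[of k z] i1 by simp
      also have "\<dots> = (LINT y|lborel. complex_of_real (U k (z - y)) * (\<phi> y - \<phi> z))"
        by (simp add: algebra_simps)
      finally have eq: "\<psi> k z - \<phi> z = (LINT y|lborel. complex_of_real (U k (z - y)) * (\<phi> y - \<phi> z))" .
      have i2: "integrable lborel (\<lambda>y. complex_of_real (U k (z - y)) * (\<phi> y - \<phi> z))"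
        using Fint[of k z] i1 by (simp add: algebra_simps)
      have "ennreal (norm (\<psi> k z - \<phi> z)) \<le> (\<integral>\<^sup>+y. norm (complex_of_real (U k (z - y)) * (\<phi> y - \<phi> z)) \<partial>lborel)"
        unfolding eq by (rule integral_norm_bound_ennreal[OF i2])
      also have "\<dots> \<le> (\<integral>\<^sup>+y. ennreal (e / 2) * ennreal (U k (z - y)) \<partial>lborel)"
      proof (rule nn_integral_mono)
        fix y
        show "ennreal (norm (complex_of_real (U k (z - y)) * (\<phi> y - \<phi> z))) \<le> ennreal (e / 2) * ennreal (U k (z - y))"
        proof (cases "U k (z - y) = 0")
          case True then show ?thesis by simp
        next
          case False
          then have "norm (z - y) < 1 / Suc k" using Us[of k "z - y"] by (meson not_le)
          then have "dist y z < d" using kd by (simp add: dist_norm norm_minus_commute)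
          then have "norm (\<phi> y - \<phi> z) \<le> e / 2" using dd[of y] by (simp add: dist_norm)
          then have "norm (\<phi> y - \<phi> z) * U k (z - y) \<le> e / 2 * U k (z - y)"
            using U0[of k "z - y"] by (rule mult_right_mono)
          then have "norm (complex_of_real (U k (z - y)) * (\<phi> y - \<phi> z)) \<le> e / 2 * U k (z - y)"
            using U0[of k "z - y"] by (simp add: norm_mult mult.commute)
          then have "ennreal (norm (complex_of_real (U k (z - y)) * (\<phi> y - \<phi> z))) \<le> ennreal (e / 2 * U k (z - y))"
            by (rule ennreal_leI)
          also have "\<dots> = ennreal (e / 2) * ennreal (U k (z - y))"
            using e U0[of k "z - y"] by (intro ennreal_mult) auto
          finally show ?thesis .
        qed
      qed
      also have "\<dots> = ennreal (e / 2) * (\<integral>\<^sup>+y. ennreal (U k (z - y)) \<partial>lborel)"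
        by (rule nn_integral_cmult) measurable
      also have "\<dots> = ennreal (e / 2)" using moll_shift(1)[OF Ut U0 U1] by simp
      finally have "norm (\<psi> k z - \<phi> z) \<le> e / 2" using e by simp
      then show "dist (\<psi> k z) (\<phi> z) < e" using e by (simp add: dist_norm)
    qed
  qed

  have lim: "(\<lambda>k. LINT z|lborel. g z * \<psi> k z) \<longlonglongrightarrow> (LINT z|lborel. g z * \<phi> z)"
  proof (rule integral_dominated_convergence[where w="\<lambda>z. B * (norm (g z) * indicator (cball 0 (R + 1)) z)"])
    show "(\<lambda>z. g z * \<phi> z) \<in> borel_measurable lborel" by measurable
    show "(\<lambda>z. g z * \<psi> k z) \<in> borel_measurable lborel" for k by measurable
    show "integrable lborel (\<lambda>z. B * (norm (g z) * indicator (cball 0 (R + 1)) z))"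
      using gloc by simp
    show "AE z in lborel. (\<lambda>k. g z * \<psi> k z) \<longlonglongrightarrow> g z * \<phi> z"
      using conv by (intro AE_I2 tendsto_mult_left)
    show "AE z in lborel. norm (g z * \<psi> k z) \<le> B * (norm (g z) * indicator (cball 0 (R + 1)) z)" for k
    proof (rule AE_I2)
      fix z :: pt4
      show "norm (g z * \<psi> k z) \<le> B * (norm (g z) * indicator (cball 0 (R + 1)) z)"
      proof (cases "norm z \<le> R + 1")
        case True
        have "norm (g z) * norm (\<psi> k z) \<le> norm (g z) * B" by (rule mult_left_mono[OF \<psi>B]) simp
        then show ?thesis using True
          by (simp add: norm_mult indicator_def dist_norm mult.commute)
      next
        case False then show ?thesis using \<psi>supp[of z k] B0 by (simp add: indicator_def dist_norm)
      qed
    qed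
  qed

  have bnd: "ennreal ((norm (LINT z|lborel. g z * \<psi> k z))\<^sup>2) \<le> L2sq h * (\<integral>\<^sup>+z. ennreal ((norm (\<phi> z))\<^sup>2) \<partial>lborel)" for k
  proof -
    define T where "T y = (LINT z|lborel. g z * complex_of_real (U k (z - y)))" for y
    have Tm[measurable]: "T \<in> borel_measurable borel" unfolding T_def by measurable
    have us: "U k z = 0" if "1 \<le> norm z" for z
    proof -
      have "1 / real (Suc k) \<le> 1" by simp
      then have "1 / real (Suc k) \<le> norm z" using that by linarith
      then show ?thesis using Us[of k z] by simp
    qed
    have eq: "(LINT z|lborel. g z * \<psi> k z) = (LINT y|lborel. T y * \<phi> y)"
      unfolding \<psi>_def T_def
      by (rule fubini_step[symmetric, OF _ gloc Ut U0 U1 us _ \<phi>B \<phi>supp]) measurable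
    have n1: "ennreal (norm (LINT y|lborel. T y * \<phi> y)) \<le> (\<integral>\<^sup>+y. ennreal (norm (T y)) * ennreal (norm (\<phi> y)) \<partial>lborel)"
    proof (cases "integrable lborel (\<lambda>y. T y * \<phi> y)")
      case True
      have "ennreal (norm (LINT y|lborel. T y * \<phi> y)) \<le> (\<integral>\<^sup>+y. norm (T y * \<phi> y) \<partial>lborel)"
        by (rule integral_norm_bound_ennreal[OF True])
      also have "\<dots> = (\<integral>\<^sup>+y. ennreal (norm (T y)) * ennreal (norm (\<phi> y)) \<partial>lborel)"
        by (simp add: norm_mult ennreal_mult)
      finally show ?thesis .
    next
      case False then show ?thesis by (simp add: not_integrable_integral_eq)
    qed
    have "ennreal ((norm (LINT z|lborel. g z * \<psi> k z))\<^sup>2) = (ennreal (norm (LINT y|lborel. T y * \<phi> y)))\<^sup>2"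
      unfolding eq by (simp add: ennreal_power)
    also have "\<dots> \<le> (\<integral>\<^sup>+y. ennreal (norm (T y)) * ennreal (norm (\<phi> y)) \<partial>lborel)\<^sup>2"
      by (rule power_mono[OF n1]) simp
    also have "\<dots> \<le> (\<integral>\<^sup>+y. (ennreal (norm (T y)))\<^sup>2 \<partial>lborel) * (\<integral>\<^sup>+y. (ennreal (norm (\<phi> y)))\<^sup>2 \<partial>lborel)"
      by (rule Cauchy_Schwarz_nn_integral) measurable
    also have "(\<integral>\<^sup>+y. (ennreal (norm (T y)))\<^sup>2 \<partial>lborel) \<le> L2sq h"
      using star[OF fm Hg Hh Ut U0 U1, of k] unfolding T_def by (simp add: ennreal_power)
    also have "(\<integral>\<^sup>+y. (ennreal (norm (\<phi> y)))\<^sup>2 \<partial>lborel) = (\<integral>\<^sup>+z. ennreal ((norm (\<phi> z))\<^sup>2) \<partial>lborel)"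
      by (simp add: ennreal_power)
    finally show ?thesis by (simp add: mult_right_mono)
  qed

  have "(\<lambda>k. ennreal ((norm (LINT z|lborel. g z * \<psi> k z))\<^sup>2)) \<longlonglongrightarrow> ennreal ((norm (LINT z|lborel. g z * \<phi> z))\<^sup>2)"
    by (intro tendsto_ennrealI tendsto_power tendsto_norm lim)
  then show ?thesis
    by (rule LIMSEQ_le_const2) (use bnd in auto)
qed

lemma tail_small:
  fixes A :: "pt4 set"
  assumes A: "A \<in> sets borel" "emeasure lborel A < \<infinity>" and e: "0 < e"
  obtains n :: nat where "emeasure lborel (A - cball 0 (real n)) < e"
proof -
  define D where "D n = A - cball 0 (real n)" for n :: nat
  have Ds: "range D \<subseteq> sets lborel" unfolding D_def using A by auto
  have dec: "decseq D" unfolding D_def decseq_def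
    by (auto simp: subset_eq dist_norm)
  have fin: "emeasure lborel (D i) \<noteq> \<infinity>" for i
  proof -
    have "emeasure lborel (D i) \<le> emeasure lborel A" unfolding D_def using A by (intro emeasure_mono) auto
    then show ?thesis using A by (auto simp: top_unique less_top[symmetric])
  qed
  have "(\<Inter>i. D i) = {}"
  proof -
    have "x \<notin> (\<Inter>i. D i)" for x
    proof -
      obtain n :: nat where "norm x \<le> real n" using real_arch_simple by blast
      then show ?thesis by (auto simp: D_def dist_norm)
    qed
    then show ?thesis by blast
  qed
  then have "(\<lambda>i. emeasure lborel (D i)) \<longlonglongrightarrow> 0"
    using Lim_emeasure_decseq[OF Ds dec fin] by simp
  then have "eventually (\<lambda>i. emeasure lborel (D i) < e) sequentially"
    using e by (rule order_tendstoD(2))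
  then obtain n where "emeasure lborel (D n) < e" by (auto simp: eventually_sequentially)
  then show ?thesis using that unfolding D_def by blast
qed

lemma ind_approx:
  fixes A :: "pt4 set" and e :: real
  assumes A[measurable]: "A \<in> sets borel" and Af: "emeasure lborel A < \<infinity>" and e: "0 < e"
  obtains ch :: "pt4 \<Rightarrow> real" where "continuous_on UNIV ch" "bounded {z. ch z \<noteq> 0}" "\<And>z. 0 \<le> ch z" "\<And>z. ch z \<le> 1"
    "(\<integral>\<^sup>+z. ennreal \<bar>ch z - indicator A z\<bar> \<partial>lborel) < ennreal e"
proof -
  have e3: "0 < e / 3" using e by simp
  obtain n :: nat where n: "emeasure lborel (A - cball 0 (real n)) < ennreal (e / 3)"
    using tail_small[OF A Af, of "ennreal (e/3)"] e by auto
  define A' where "A' = A \<inter> cball 0 (real n)"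
  have A'l: "A' \<in> sets lebesgue" unfolding A'_def using A by auto
  obtain F where F: "closed F" "F \<subseteq> A'" "A' - F \<in> lmeasurable" "emeasure lebesgue (A' - F) < ennreal (e / 3)"
    using sets_lebesgue_inner_closed[OF A'l e3] by metis
  obtain G where G: "open G" "A' \<subseteq> G" "G - A' \<in> lmeasurable" "emeasure lebesgue (G - A') < ennreal (e / 3)"
    using sets_lebesgue_outer_open[OF A'l e3] by metis
  define G' where "G' = G \<inter> ball 0 (real n + 1)"
  have G'o: "open G'" unfolding G'_def using G by auto
  have A'G': "A' \<subseteq> G'"
  proof
    fix z assume z: "z \<in> A'"
    then have "z \<in> G" using G(2) by blast
    moreover have "norm z \<le> real n" using z unfolding A'_def by (simp add: dist_norm norm_minus_commute)
    ultimately show "z \<in> G'" unfolding G'_def by (simp add: dist_norm norm_minus_commute)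
  qed
  obtain ch :: "pt4 \<Rightarrow> real" where chc: "continuous_on UNIV ch" and chr: "\<And>x. ch x \<in> closed_segment 1 0"
    and ch1: "\<And>x. x \<in> F \<Longrightarrow> ch x = 1" and ch0: "\<And>x. x \<in> - G' \<Longrightarrow> ch x = 0"
    using Urysohn[of F "- G'" 1 0] F(1) G'o F(2) A'G' by (auto simp: closed_Compl)
  have ch01: "0 \<le> ch x" "ch x \<le> 1" for x using chr[of x] by (auto simp: closed_segment_eq_real_ivl)
  have "bounded {z. ch z \<noteq> 0}"
  proof (rule bounded_subset[of "ball 0 (real n + 1)"])
    show "{z. ch z \<noteq> 0} \<subseteq> ball 0 (real n + 1)"
    proof
      fix z assume "z \<in> {z. ch z \<noteq> 0}"
      then have "z \<in> G'" using ch0[of z] by blast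
      then show "z \<in> ball 0 (real n + 1)" unfolding G'_def by blast
    qed
  qed simp
  moreover have "(\<integral>\<^sup>+z. ennreal \<bar>ch z - indicator A z\<bar> \<partial>lborel) < ennreal e"
  proof -
    have [measurable]: "G' \<in> sets borel" "F \<in> sets borel" using G'o F(1) by (auto simp: borel_open borel_closed)
    have pw: "ennreal \<bar>ch z - indicator A z\<bar> \<le> indicator (G' - F) z + indicator (A - cball 0 (real n)) z" for z
    proof (cases "z \<in> F")
      case True then show ?thesis using ch1[of z] F(2) by (auto simp: A'_def indicator_def)
    next
      case False
      show ?thesis
      proof (cases "z \<in> G'")
        case True
        have "\<bar>ch z - indicator A z\<bar> \<le> 1" using ch01[of z] by (auto simp: indicator_def)
        then show ?thesis using True False by (auto simp: indicator_def intro: order_trans[OF ennreal_leI[of _ 1]])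
      next
        case False
        then have "z \<notin> A'" using A'G' by auto
        then show ?thesis using ch0[of z] False by (auto simp: A'_def indicator_def)
      qed
    qed
    have "(\<integral>\<^sup>+z. ennreal \<bar>ch z - indicator A z\<bar> \<partial>lborel) \<le> (\<integral>\<^sup>+z. indicator (G' - F) z + indicator (A - cball 0 (real n)) z \<partial>lborel)"
      by (rule nn_integral_mono) (rule pw)
    also have "\<dots> = emeasure lborel (G' - F) + emeasure lborel (A - cball 0 (real n))"
      by (subst nn_integral_add) auto
    also have "emeasure lborel (G' - F) = emeasure lebesgue (G' - F)" by simp
    also have "\<dots> \<le> emeasure lebesgue ((G - A') \<union> (A' - F))"
      by (rule emeasure_mono) (use G F in \<open>auto simp: G'_def\<close>)
    also have "\<dots> \<le> emeasure lebesgue (G - A') + emeasure lebesgue (A' - F)"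
      by (rule emeasure_subadditive) (use G F in auto)
    also have "\<dots> + emeasure lborel (A - cball 0 (real n)) < ennreal (e/3) + ennreal (e/3) + ennreal (e/3)"
      using G(4) F(4) n by (intro add_strict_mono) auto
    also have "\<dots> = ennreal e" using e by (simp add: ennreal_plus[symmetric] del: ennreal_plus)
    finally show ?thesis by (simp add: add_right_mono)
  qed
  ultimately show ?thesis using that chc ch01 by blast
qed

definition CC :: "(pt4 \<Rightarrow> complex) \<Rightarrow> bool" where
  "CC \<phi> \<longleftrightarrow> continuous_on UNIV \<phi> \<and> bounded {z. \<phi> z \<noteq> 0}"

lemma CC_meas: "CC \<phi> \<Longrightarrow> \<phi> \<in> borel_measurable borel"
  unfolding CC_def by (simp add: borel_measurable_continuous_onI)

lemma L1_dense:
  fixes \<psi> :: "pt4 \<Rightarrow> complex"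
  assumes "integrable lborel \<psi>"
  shows "\<forall>e>0. \<exists>\<phi>. CC \<phi> \<and> (\<integral>\<^sup>+z. ennreal (norm (\<phi> z - \<psi> z)) \<partial>lborel) < ennreal e"
  using assms
proof (induct rule: integrable_induct)
  case (base A c)
  show ?case
  proof (intro allI impI)
    fix e :: real assume e: "0 < e"
    show "\<exists>\<phi>. CC \<phi> \<and> (\<integral>\<^sup>+z. ennreal (norm (\<phi> z - indicator A z *\<^sub>R c)) \<partial>lborel) < ennreal e"
    proof (cases "c = 0")
      case True
      then show ?thesis using e by (intro exI[of _ "\<lambda>_. 0"]) (auto simp: CC_def)
    next
      case False
      then have nc: "0 < norm c" by simp
      have A[measurable]: "A \<in> sets borel" using base(1) by simp
      have ecp: "0 < e / norm c" using e nc by simp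
      obtain ch :: "pt4 \<Rightarrow> real" where chc: "continuous_on UNIV ch" and chb: "bounded {z. ch z \<noteq> 0}"
        and "\<And>z. 0 \<le> ch z" "\<And>z. ch z \<le> 1"
        and chi: "(\<integral>\<^sup>+z. ennreal \<bar>ch z - indicator A z\<bar> \<partial>lborel) < ennreal (e / norm c)"
        using ind_approx[OF A base(2) ecp] by blast
      have [measurable]: "ch \<in> borel_measurable borel" using chc by (rule borel_measurable_continuous_onI)
      define \<phi> where "\<phi> z = complex_of_real (ch z) * c" for z
      have "CC \<phi>"
      proof -
        have "continuous_on UNIV \<phi>" unfolding \<phi>_def[abs_def] using chc by (intro continuous_intros)
        moreover have "{z. \<phi> z \<noteq> 0} \<subseteq> {z. ch z \<noteq> 0}" by (auto simp: \<phi>_def)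
        ultimately show ?thesis using chb by (auto simp: CC_def intro: bounded_subset)
      qed
      moreover have "(\<integral>\<^sup>+z. ennreal (norm (\<phi> z - indicator A z *\<^sub>R c)) \<partial>lborel) < ennreal e"
      proof -
        have "(\<integral>\<^sup>+z. ennreal (norm (\<phi> z - indicator A z *\<^sub>R c)) \<partial>lborel)
            = (\<integral>\<^sup>+z. ennreal (norm c) * ennreal \<bar>ch z - indicator A z\<bar> \<partial>lborel)"
        proof (rule nn_integral_cong)
          fix z
          have "\<phi> z - indicator A z *\<^sub>R c = complex_of_real (ch z - indicator A z) * c"
            by (simp add: \<phi>_def scaleR_conv_of_real algebra_simps)
          then have "norm (\<phi> z - indicator A z *\<^sub>R c) = norm c * \<bar>ch z - indicator A z\<bar>"
            by (simp only: norm_mult norm_of_real mult.commute)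
          then show "ennreal (norm (\<phi> z - indicator A z *\<^sub>R c)) = ennreal (norm c) * ennreal \<bar>ch z - indicator A z\<bar>"
            by (simp add: ennreal_mult)
        qed
        also have "\<dots> = ennreal (norm c) * (\<integral>\<^sup>+z. ennreal \<bar>ch z - indicator A z\<bar> \<partial>lborel)"
          by (rule nn_integral_cmult) measurable
        also have "\<dots> < ennreal (norm c) * ennreal (e / norm c)"
          using chi nc by (intro ennreal_mult_strict_left_mono) auto
        also have "\<dots> = ennreal (norm c * (e / norm c))" using nc ecp by (subst ennreal_mult) auto
        also have "\<dots> = ennreal e" using nc by simp
        finally show ?thesis .
      qed
      ultimately show ?thesis by blast
    qed
  qed
next
  case (add f g)
  have [measurable]: "f \<in> borel_measurable lborel" "g \<in> borel_measurable lborel"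
    using add(1,3) by (auto intro: borel_measurable_integrable)
  show ?case
  proof (intro allI impI)
    fix e :: real assume e: "0 < e"
    obtain \<phi>1 where 1: "CC \<phi>1" "(\<integral>\<^sup>+z. ennreal (norm (\<phi>1 z - f z)) \<partial>lborel) < ennreal (e/2)"
      using add(2) e by (meson half_gt_zero)
    obtain \<phi>2 where 2: "CC \<phi>2" "(\<integral>\<^sup>+z. ennreal (norm (\<phi>2 z - g z)) \<partial>lborel) < ennreal (e/2)"
      using add(4) e by (meson half_gt_zero)
    have [measurable]: "\<phi>1 \<in> borel_measurable lborel" "\<phi>2 \<in> borel_measurable lborel"
      using 1(1) 2(1) by (auto dest: CC_meas)
    have "CC (\<lambda>z. \<phi>1 z + \<phi>2 z)"
    proof -
      have "{z. \<phi>1 z + \<phi>2 z \<noteq> 0} \<subseteq> {z. \<phi>1 z \<noteq> 0} \<union> {z. \<phi>2 z \<noteq> 0}" by auto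
      moreover have "bounded ({z. \<phi>1 z \<noteq> 0} \<union> {z. \<phi>2 z \<noteq> 0})"
        using 1(1) 2(1) unfolding CC_def by simp
      ultimately have "bounded {z. \<phi>1 z + \<phi>2 z \<noteq> 0}" by (rule bounded_subset[rotated])
      then show ?thesis using 1(1) 2(1) unfolding CC_def
        by (auto intro: continuous_on_add)
    qed
    moreover have "(\<integral>\<^sup>+z. ennreal (norm ((\<phi>1 z + \<phi>2 z) - (f z + g z))) \<partial>lborel) < ennreal e"
    proof -
      have "(\<integral>\<^sup>+z. ennreal (norm ((\<phi>1 z + \<phi>2 z) - (f z + g z))) \<partial>lborel)
          \<le> (\<integral>\<^sup>+z. ennreal (norm (\<phi>1 z - f z)) + ennreal (norm (\<phi>2 z - g z)) \<partial>lborel)"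
      proof (rule nn_integral_mono)
        fix z
        have "norm ((\<phi>1 z + \<phi>2 z) - (f z + g z)) \<le> norm (\<phi>1 z - f z) + norm (\<phi>2 z - g z)"
          using norm_triangle_ineq[of "\<phi>1 z - f z" "\<phi>2 z - g z"] by (simp add: algebra_simps)
        then show "ennreal (norm ((\<phi>1 z + \<phi>2 z) - (f z + g z))) \<le> ennreal (norm (\<phi>1 z - f z)) + ennreal (norm (\<phi>2 z - g z))"
          by (simp add: ennreal_plus[symmetric] ennreal_leI del: ennreal_plus)
      qed
      also have "\<dots> = (\<integral>\<^sup>+z. ennreal (norm (\<phi>1 z - f z)) \<partial>lborel) + (\<integral>\<^sup>+z. ennreal (norm (\<phi>2 z - g z)) \<partial>lborel)"
        by (rule nn_integral_add) measurable
      also have "\<dots> < ennreal (e/2) + ennreal (e/2)"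
        using 1(2) 2(2) by (rule add_strict_mono)
      also have "\<dots> = ennreal e" using e by (simp add: ennreal_plus[symmetric] del: ennreal_plus)
      finally show ?thesis .
    qed
    ultimately show "\<exists>\<phi>. CC \<phi> \<and> (\<integral>\<^sup>+z. ennreal (norm (\<phi> z - (f z + g z))) \<partial>lborel) < ennreal e"
      by blast
  qed
next
  case (lim f s)
  have [measurable]: "f \<in> borel_measurable lborel" using lim(5) by (rule borel_measurable_integrable)
  have [measurable]: "s i \<in> borel_measurable lborel" for i using lim(1) by (rule borel_measurable_integrable)
  show ?case
  proof (intro allI impI)
    fix e :: real assume e: "0 < e"
    have "(\<lambda>i. \<integral>\<^sup>+x. ennreal (norm (f x - s i x)) \<partial>lborel) \<longlonglongrightarrow> 0"
    proof (rule nn_integral_dominated_convergence_norm[where w="\<lambda>x. 2 * norm (f x)"])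
      show "(\<lambda>x. 2 * norm (f x)) \<in> borel_measurable lborel" by measurable
      show "AE x in lborel. norm (s j x) \<le> 2 * norm (f x)" for j using lim(4) by simp
      have "(\<integral>\<^sup>+x. ennreal (2 * norm (f x)) \<partial>lborel) = 2 * (\<integral>\<^sup>+x. ennreal (norm (f x)) \<partial>lborel)"
        by (subst nn_integral_cmult[symmetric]) (auto simp: ennreal_mult)
      also have "\<dots> < \<infinity>" using lim(5) by (simp add: integrable_iff_bounded ennreal_mult_less_top)
      finally show "(\<integral>\<^sup>+x. ennreal (2 * norm (f x)) \<partial>lborel) < \<infinity>" .
      show "AE x in lborel. (\<lambda>i. s i x) \<longlonglongrightarrow> f x" using lim(3) by simp
    qed measurable
    then have "eventually (\<lambda>i. (\<integral>\<^sup>+x. ennreal (norm (f x - s i x)) \<partial>lborel) < ennreal (e/2)) sequentially"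
      using e by (intro order_tendstoD(2)) auto
    then obtain i where i: "(\<integral>\<^sup>+x. ennreal (norm (f x - s i x)) \<partial>lborel) < ennreal (e/2)"
      by (auto simp: eventually_sequentially)
    obtain \<phi> where \<phi>: "CC \<phi>" "(\<integral>\<^sup>+z. ennreal (norm (\<phi> z - s i z)) \<partial>lborel) < ennreal (e/2)"
      using lim(2)[of i] e by (meson half_gt_zero)
    have [measurable]: "\<phi> \<in> borel_measurable lborel" using \<phi>(1) by (auto dest: CC_meas)
    have "(\<integral>\<^sup>+z. ennreal (norm (\<phi> z - f z)) \<partial>lborel)
        \<le> (\<integral>\<^sup>+z. ennreal (norm (\<phi> z - s i z)) + ennreal (norm (f z - s i z)) \<partial>lborel)"
    proof (rule nn_integral_mono)
      fix z
      have "norm (\<phi> z - f z) \<le> norm (\<phi> z - s i z) + norm (f z - s i z)"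
        using norm_triangle_ineq4[of "\<phi> z - s i z" "f z - s i z"] by simp
      then show "ennreal (norm (\<phi> z - f z)) \<le> ennreal (norm (\<phi> z - s i z)) + ennreal (norm (f z - s i z))"
        by (simp add: ennreal_plus[symmetric] ennreal_leI del: ennreal_plus)
    qed
    also have "\<dots> = (\<integral>\<^sup>+z. ennreal (norm (\<phi> z - s i z)) \<partial>lborel) + (\<integral>\<^sup>+z. ennreal (norm (f z - s i z)) \<partial>lborel)"
      by (rule nn_integral_add) measurable
    also have "\<dots> < ennreal (e/2) + ennreal (e/2)"
      using \<phi>(2) i by (rule add_strict_mono)
    also have "\<dots> = ennreal e" using e by (simp add: ennreal_plus[symmetric] del: ennreal_plus)
    finally show "\<exists>\<phi>. CC \<phi> \<and> (\<integral>\<^sup>+z. ennreal (norm (\<phi> z - f z)) \<partial>lborel) < ennreal e"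
      using \<phi>(1) by blast
  qed
qed

definition clampN :: "real \<Rightarrow> real \<Rightarrow> real" where
  "clampN N x = max (- N) (min N x)"

definition clipC :: "real \<Rightarrow> complex \<Rightarrow> complex" where
  "clipC N w = complex_of_real (clampN N (Re w)) + \<i> * complex_of_real (clampN N (Im w))"

lemma clipC_cont: "continuous_on UNIV (clipC N)"
  unfolding clipC_def[abs_def] clampN_def by (intro continuous_intros)

lemma clipC_norm: "0 \<le> N \<Longrightarrow> norm (clipC N w) \<le> 2 * N"
proof -
  assume N: "0 \<le> N"
  have "norm (clipC N w) \<le> \<bar>Re (clipC N w)\<bar> + \<bar>Im (clipC N w)\<bar>" by (rule cmod_le)
  also have "\<dots> \<le> N + N" using N by (simp add: clipC_def clampN_def)
  finally show ?thesis by simp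
qed

lemma clipC_id: "norm w \<le> N \<Longrightarrow> clipC N w = w"
proof -
  assume w: "norm w \<le> N"
  have "\<bar>Re w\<bar> \<le> N" "\<bar>Im w\<bar> \<le> N" using abs_Re_le_cmod[of w] abs_Im_le_cmod[of w] w by linarith+
  then have "clampN N (Re w) = Re w" "clampN N (Im w) = Im w" by (auto simp: clampN_def)
  then show ?thesis unfolding clipC_def using complex_eq[of w] by simp
qed

lemma approx_seq:
  fixes \<psi> :: "pt4 \<Rightarrow> complex" and N R :: real
  assumes \<psi>m[measurable]: "\<psi> \<in> borel_measurable borel" and \<psi>B: "\<And>z. norm (\<psi> z) \<le> N"
    and \<psi>s: "\<And>z. R < norm z \<Longrightarrow> \<psi> z = 0"
  obtains \<phi> :: "nat \<Rightarrow> pt4 \<Rightarrow> complex" where "\<And>n. continuous_on UNIV (\<phi> n)" "\<And>n. bounded {z. \<phi> n z \<noteq> 0}"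
    "\<And>n z. norm (\<phi> n z) \<le> 2 * N" "\<And>n z. R + 1 \<le> norm z \<Longrightarrow> \<phi> n z = 0"
    "AE z in lborel. (\<lambda>n. \<phi> n z) \<longlonglongrightarrow> \<psi> z"
proof -
  have N0: "0 \<le> N" using \<psi>B[of 0] norm_ge_zero order_trans by blast
  have \<psi>i: "integrable lborel \<psi>"
  proof (rule Bochner_Integration.integrable_bound)
    show "integrable lborel (\<lambda>z::pt4. N * indicator (cball 0 R) z :: real)"
      using emeasure_lborel_cball_finite[of "0::pt4" R] by (intro integrable_mult_right integrable_real_indicator) auto
    show "\<psi> \<in> borel_measurable lborel" by simp
    show "AE z in lborel. norm (\<psi> z) \<le> norm (N * indicator (cball 0 R) z :: real)"
    proof (rule AE_I2)
      fix z :: pt4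
      show "norm (\<psi> z) \<le> norm (N * indicator (cball 0 R) z :: real)"
      proof (cases "norm z \<le> R")
        case True then show ?thesis using \<psi>B[of z] N0 by (simp add: indicator_def dist_norm)
      next
        case False then show ?thesis using \<psi>s[of z] by simp
      qed
    qed
  qed
  have "\<forall>n. \<exists>a. CC a \<and> (\<integral>\<^sup>+z. ennreal (norm (a z - \<psi> z)) \<partial>lborel) < ennreal (inverse (real (Suc n)))"
    using L1_dense[OF \<psi>i] by simp
  then obtain a where aC: "\<And>n. CC (a n)"
    and aL: "\<And>n. (\<integral>\<^sup>+z. ennreal (norm (a n z - \<psi> z)) \<partial>lborel) < ennreal (inverse (real (Suc n)))"
    by metis
  have am[measurable]: "a n \<in> borel_measurable borel" for n using aC by (rule CC_meas)
  define u where "u n z = a n z - \<psi> z" for n z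
  have ui: "integrable lborel (u n)" for n
  proof (rule integrableI_bounded)
    show "u n \<in> borel_measurable lborel" unfolding u_def by measurable
    show "(\<integral>\<^sup>+z. ennreal (norm (u n z)) \<partial>lborel) < \<infinity>"
      using aL[of n] unfolding u_def by (auto intro: order.strict_trans)
  qed
  have "(\<lambda>n. LINT z|lborel. norm (u n z)) \<longlonglongrightarrow> 0"
  proof (rule tendsto_sandwich[of "\<lambda>_. 0" _ _ "\<lambda>n. inverse (real (Suc n))"])
    show "\<forall>\<^sub>F n in sequentially. 0 \<le> (LINT z|lborel. norm (u n z))" by simp
    show "\<forall>\<^sub>F n in sequentially. (LINT z|lborel. norm (u n z)) \<le> inverse (real (Suc n))"
    proof (rule always_eventually, rule allI)
      fix n
      have "ennreal (LINT z|lborel. norm (u n z)) = (\<integral>\<^sup>+z. ennreal (norm (u n z)) \<partial>lborel)"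
        by (rule nn_integral_eq_integral[symmetric]) (auto intro: integrable_norm ui)
      also have "\<dots> < ennreal (inverse (real (Suc n)))" using aL[of n] unfolding u_def .
      finally show "(LINT z|lborel. norm (u n z)) \<le> inverse (real (Suc n))"
        by (simp add: ennreal_less_iff less_imp_le)
    qed
    show "(\<lambda>_. 0::real) \<longlonglongrightarrow> 0" by simp
    show "(\<lambda>n. inverse (real (Suc n))) \<longlonglongrightarrow> 0" by (rule LIMSEQ_inverse_real_of_nat)
  qed
  then obtain r :: "nat \<Rightarrow> nat" where r: "strict_mono r" "AE z in lborel. (\<lambda>n. u (r n) z) \<longlonglongrightarrow> 0"
    using tendsto_L1_AE_subseq[where u=u and M=lborel] ui by blast
  define \<phi> where "\<phi> n z = complex_of_real (bump R z) * clipC N (a (r n) z)" for n z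
  have "continuous_on UNIV (\<phi> n)" for n
  proof -
    have "continuous_on UNIV (a (r n))" using aC unfolding CC_def by simp
    then have "continuous_on UNIV (\<lambda>z. clipC N (a (r n) z))"
      by (rule continuous_on_compose2[OF clipC_cont]) auto
    then show ?thesis unfolding \<phi>_def[abs_def] using bump_cont[of R] by (intro continuous_intros)
  qed
  moreover have "\<phi> n z = 0" if "R + 1 \<le> norm z" for n z
    using bump_props(4)[OF that] by (simp add: \<phi>_def)
  moreover have "bounded {z. \<phi> n z \<noteq> 0}" for n
  proof (rule bounded_subset[of "cball 0 (R + 1)"])
    show "{z. \<phi> n z \<noteq> 0} \<subseteq> cball 0 (R + 1)"
    proof
      fix z assume "z \<in> {z. \<phi> n z \<noteq> 0}"
      then have "\<not> R + 1 \<le> norm z" using bump_props(4)[of R z] by (auto simp: \<phi>_def)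
      then show "z \<in> cball 0 (R + 1)" by (simp add: dist_norm)
    qed
  qed simp
  moreover have "norm (\<phi> n z) \<le> 2 * N" for n z
  proof -
    have "norm (\<phi> n z) = \<bar>bump R z\<bar> * norm (clipC N (a (r n) z))" by (simp add: \<phi>_def norm_mult)
    also have "\<dots> \<le> 1 * (2 * N)"
      using bump_props(1,2)[of R z] clipC_norm[OF N0] by (intro mult_mono) auto
    finally show ?thesis by simp
  qed
  moreover have "AE z in lborel. (\<lambda>n. \<phi> n z) \<longlonglongrightarrow> \<psi> z"
    using r(2)
  proof (rule AE_mp, intro AE_I2 impI)
    fix z assume "(\<lambda>n. u (r n) z) \<longlonglongrightarrow> 0"
    then have "(\<lambda>n. u (r n) z + \<psi> z) \<longlonglongrightarrow> 0 + \<psi> z" by (intro tendsto_add) auto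
    then have ar: "(\<lambda>n. a (r n) z) \<longlonglongrightarrow> \<psi> z" by (simp add: u_def)
    have "isCont (clipC N) (\<psi> z)" using clipC_cont by (simp add: continuous_on_eq_continuous_at)
    then have "(\<lambda>n. clipC N (a (r n) z)) \<longlonglongrightarrow> clipC N (\<psi> z)" using ar by (rule isCont_tendsto_compose)
    then have "(\<lambda>n. \<phi> n z) \<longlonglongrightarrow> complex_of_real (bump R z) * clipC N (\<psi> z)"
      unfolding \<phi>_def by (intro tendsto_mult_left)
    moreover have "complex_of_real (bump R z) * clipC N (\<psi> z) = \<psi> z"
    proof (cases "norm z \<le> R")
      case True then show ?thesis using bump_props(3)[OF True] clipC_id[OF \<psi>B[of z]] by simp
    next
      case False
      then have "\<psi> z = 0" using \<psi>s[of z] by simp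
      moreover have "clipC N 0 = 0" using clipC_id[of 0 N] N0 by simp
      ultimately show ?thesis by simp
    qed
    ultimately show "(\<lambda>n. \<phi> n z) \<longlonglongrightarrow> \<psi> z" by simp
  qed
  ultimately show ?thesis using that by blast
qed

lemma bdd_bound:
  fixes f g h \<psi> :: "pt4 \<Rightarrow> complex" and N R :: real
  assumes fm[measurable]: "f \<in> borel_measurable borel"
    and Hg: "is_conv_density f g" and Hh: "is_conv_density (f_sharp f) h"
    and Cfin: "L2sq h < \<infinity>"
    and \<psi>m[measurable]: "\<psi> \<in> borel_measurable borel" and \<psi>B: "\<And>z. norm (\<psi> z) \<le> N"
    and \<psi>s: "\<And>z. R < norm z \<Longrightarrow> \<psi> z = 0"
  shows "ennreal ((norm (LINT z|lborel. g z * \<psi> z))\<^sup>2) \<le> L2sq h * (\<integral>\<^sup>+z. ennreal ((norm (\<psi> z))\<^sup>2) \<partial>lborel)"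
proof -
  have N0: "0 \<le> N" using \<psi>B[of 0] norm_ge_zero order_trans by blast
  show ?thesis
  proof (rule approx_seq[OF \<psi>m \<psi>B \<psi>s])
  fix \<phi> :: "nat \<Rightarrow> pt4 \<Rightarrow> complex"
  assume \<phi>c: "\<And>n. continuous_on UNIV (\<phi> n)"
    and \<phi>b: "\<And>n. bounded {z. \<phi> n z \<noteq> 0}" and \<phi>N: "\<And>n z. norm (\<phi> n z) \<le> 2 * N"
    and \<phi>s: "\<And>n z. R + 1 \<le> norm z \<Longrightarrow> \<phi> n z = 0"
    and \<phi>conv: "AE z in lborel. (\<lambda>n. \<phi> n z) \<longlonglongrightarrow> \<psi> z"
  have [measurable]: "\<phi> n \<in> borel_measurable borel" for n using \<phi>c by (rule borel_measurable_continuous_onI)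
  have [measurable]: "g \<in> borel_measurable borel" using Hg by (rule conv_meas)
  have lim1: "(\<lambda>n. LINT z|lborel. g z * \<phi> n z) \<longlonglongrightarrow> (LINT z|lborel. g z * \<psi> z)"
  proof (rule integral_dominated_convergence[where w="\<lambda>z. 2 * N * (norm (g z) * indicator (cball 0 (R + 1)) z)"])
    show "(\<lambda>z. g z * \<psi> z) \<in> borel_measurable lborel" by measurable
    show "(\<lambda>z. g z * \<phi> n z) \<in> borel_measurable lborel" for n by measurable
    show "integrable lborel (\<lambda>z. 2 * N * (norm (g z) * indicator (cball 0 (R + 1)) z))"
      using loc_int[OF Hg] by simp
    show "AE z in lborel. (\<lambda>n. g z * \<phi> n z) \<longlonglongrightarrow> g z * \<psi> z"
      using \<phi>conv by eventually_elim (rule tendsto_mult_left)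
    show "AE z in lborel. norm (g z * \<phi> n z) \<le> 2 * N * (norm (g z) * indicator (cball 0 (R + 1)) z)" for n
    proof (rule AE_I2)
      fix z :: pt4
      show "norm (g z * \<phi> n z) \<le> 2 * N * (norm (g z) * indicator (cball 0 (R + 1)) z)"
      proof (cases "norm z \<le> R + 1")
        case True
        have "norm (g z) * norm (\<phi> n z) \<le> norm (g z) * (2 * N)" by (rule mult_left_mono[OF \<phi>N]) simp
        then show ?thesis using True by (simp add: norm_mult indicator_def dist_norm mult_ac)
      next
        case False then show ?thesis using \<phi>s[of z n] N0 by (simp add: indicator_def dist_norm)
      qed
    qed
  qed
  have lim2: "(\<lambda>n. \<integral>\<^sup>+z. ennreal ((norm (\<phi> n z))\<^sup>2) \<partial>lborel) \<longlonglongrightarrow> (\<integral>\<^sup>+z. ennreal ((norm (\<psi> z))\<^sup>2) \<partial>lborel)"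
  proof (rule nn_integral_dominated_convergence[where w="\<lambda>z. ennreal ((2 * N)\<^sup>2) * indicator (cball 0 (R + 1)) z"])
    show "(\<lambda>z. ennreal ((norm (\<phi> n z))\<^sup>2)) \<in> borel_measurable lborel" for n by measurable
    show "(\<lambda>z. ennreal ((norm (\<psi> z))\<^sup>2)) \<in> borel_measurable lborel" by measurable
    show "(\<lambda>z. ennreal ((2 * N)\<^sup>2) * indicator (cball 0 (R + 1)) z) \<in> borel_measurable lborel" by measurable
    show "AE z in lborel. ennreal ((norm (\<phi> n z))\<^sup>2) \<le> ennreal ((2 * N)\<^sup>2) * indicator (cball 0 (R + 1)) z" for n
    proof (rule AE_I2)
      fix z :: pt4
      show "ennreal ((norm (\<phi> n z))\<^sup>2) \<le> ennreal ((2 * N)\<^sup>2) * indicator (cball 0 (R + 1)) z"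
      proof (cases "norm z \<le> R + 1")
        case True
        have "(norm (\<phi> n z))\<^sup>2 \<le> (2 * N)\<^sup>2" by (rule power_mono[OF \<phi>N]) simp
        then show ?thesis using True by (simp add: indicator_def dist_norm ennreal_leI)
      next
        case False then show ?thesis using \<phi>s[of z n] by (simp add: indicator_def dist_norm)
      qed
    qed
    show "(\<integral>\<^sup>+z. ennreal ((2 * N)\<^sup>2) * indicator (cball 0 (R + 1)) (z::pt4) \<partial>lborel) < \<infinity>"
      using emeasure_lborel_cball_finite[of "0::pt4" "R + 1"]
      by (simp add: nn_integral_cmult_indicator ennreal_mult_less_top)
    show "AE z in lborel. (\<lambda>n. ennreal ((norm (\<phi> n z))\<^sup>2)) \<longlonglongrightarrow> ennreal ((norm (\<psi> z))\<^sup>2)"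
      using \<phi>conv by eventually_elim (intro tendsto_ennrealI tendsto_power tendsto_norm)
  qed
  have L1: "(\<lambda>n. ennreal ((norm (LINT z|lborel. g z * \<phi> n z))\<^sup>2)) \<longlonglongrightarrow> ennreal ((norm (LINT z|lborel. g z * \<psi> z))\<^sup>2)"
    by (intro tendsto_ennrealI tendsto_power tendsto_norm lim1)
  have L2: "(\<lambda>n. L2sq h * (\<integral>\<^sup>+z. ennreal ((norm (\<phi> n z))\<^sup>2) \<partial>lborel)) \<longlonglongrightarrow> L2sq h * (\<integral>\<^sup>+z. ennreal ((norm (\<psi> z))\<^sup>2) \<partial>lborel)"
    using Cfin lim2 by (intro ennreal_tendsto_cmult) auto
  have BB: "\<forall>n. ennreal ((norm (LINT z|lborel. g z * \<phi> n z))\<^sup>2) \<le> L2sq h * (\<integral>\<^sup>+z. ennreal ((norm (\<phi> n z))\<^sup>2) \<partial>lborel)"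
    by (intro allI cont_bound[OF fm Hg Hh \<phi>c \<phi>b])
  show ?thesis by (rule LIMSEQ_le[OF L1 L2]) (use BB in blast)
  qed
qed

lemma cnj_meas[measurable (raw)]:
  "f \<in> borel_measurable M \<Longrightarrow> (\<lambda>x. cnj (f x :: complex)) \<in> borel_measurable M"
  by (rule measurable_compose[where g=cnj]) (auto intro!: borel_measurable_continuous_onI continuous_intros)

lemma of_real_meas[measurable (raw)]:
  "f \<in> borel_measurable M \<Longrightarrow> (\<lambda>x. complex_of_real (f x)) \<in> borel_measurable M"
  by (rule measurable_compose[where g=complex_of_real]) (auto intro!: borel_measurable_continuous_onI continuous_intros)

theorem lemma2p1:
  fixes f g h :: "pt4 \<Rightarrow> complex"
  assumes "in_L2_hyp f"
    and "is_conv_density f g"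
    and "is_conv_density (f_sharp f) h"
  shows "L2sq g \<le> L2sq h"
proof (cases "L2sq h = \<infinity>")
  case True then show ?thesis by simp
next
  case False
  then have Cfin: "L2sq h < \<infinity>" by (simp add: less_top)
  have fm[measurable]: "f \<in> borel_measurable borel" using assms(1) by (rule f_meas)
  have gm[measurable]: "g \<in> borel_measurable borel" using assms(2) by (rule conv_meas)
  define E where "E N = {z::pt4. norm z \<le> real N \<and> norm (g z) \<le> real N}" for N :: nat
  have Em[measurable]: "E N \<in> sets borel" for N unfolding E_def by measurable
  define F where "F N z = ennreal ((norm (g z))\<^sup>2 * indicator (E N) z)" for N z
  have Fm[measurable]: "F N \<in> borel_measurable borel" for N unfolding F_def by measurable
  define I where "I N = integral\<^sup>N lborel (F N)" for N
  have IN: "I N \<le> L2sq h" for N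
  proof -
    define \<psi> where "\<psi> z = cnj (g z) * complex_of_real (indicator (E N) z)" for z
    have \<psi>m[measurable]: "\<psi> \<in> borel_measurable borel" unfolding \<psi>_def by measurable
    have \<psi>B: "norm (\<psi> z) \<le> real N" for z
      by (cases "z \<in> E N") (auto simp: \<psi>_def E_def)
    have \<psi>s: "\<psi> z = 0" if "real N < norm z" for z
      using that by (auto simp: \<psi>_def E_def)
    note key = bdd_bound[OF fm assms(2,3) Cfin \<psi>m \<psi>B \<psi>s]
    define G where "G z = (norm (g z))\<^sup>2 * indicator (E N) z" for z
    have G0: "0 \<le> G z" for z by (simp add: G_def)
    have Gm[measurable]: "G \<in> borel_measurable borel" unfolding G_def by measurable
    have Gb: "G z \<le> (real N)\<^sup>2 * indicator (cball 0 (real N)) z" for z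
    proof (cases "z \<in> E N")
      case True
      then have "norm (g z) \<le> real N" "norm z \<le> real N" by (auto simp: E_def)
      then show ?thesis using True by (simp add: G_def power_mono dist_norm)
    qed (simp add: G_def)
    have Gi: "integrable lborel G"
    proof (rule Bochner_Integration.integrable_bound)
      show "integrable lborel (\<lambda>z::pt4. (real N)\<^sup>2 * indicator (cball 0 (real N)) z)"
        using emeasure_lborel_cball_finite[of "0::pt4" "real N"]
        by (intro integrable_mult_right integrable_real_indicator) auto
      show "G \<in> borel_measurable lborel" by simp
      show "AE z in lborel. norm (G z) \<le> norm ((real N)\<^sup>2 * indicator (cball 0 (real N)) z)"
        using Gb G0 by (intro AE_I2) (simp add: abs_of_nonneg)
    qed
    define x where "x = integral\<^sup>L lborel G"
    have x0: "0 \<le> x" unfolding x_def using G0 by simp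
    have Ix: "I N = ennreal x"
      unfolding I_def x_def F_def G_def[symmetric] using Gi G0 by (intro nn_integral_eq_integral) auto
    have e1: "(LINT z|lborel. g z * \<psi> z) = complex_of_real x"
    proof -
      have "g z * \<psi> z = complex_of_real (G z)" for z
      proof -
        have "g z * \<psi> z = (g z * cnj (g z)) * complex_of_real (indicator (E N) z)"
          by (simp add: \<psi>_def mult.assoc)
        also have "\<dots> = complex_of_real ((norm (g z))\<^sup>2) * complex_of_real (indicator (E N) z)"
          by (simp only: complex_norm_square)
        also have "\<dots> = complex_of_real (G z)" by (simp add: G_def)
        finally show ?thesis .
      qed
      then have "(LINT z|lborel. g z * \<psi> z) = (LINT z|lborel. complex_of_real (G z))" by simp
      also have "\<dots> = complex_of_real x" unfolding x_def by (rule integral_complex_of_real)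
      finally show ?thesis .
    qed
    have e2: "(\<integral>\<^sup>+z. ennreal ((norm (\<psi> z))\<^sup>2) \<partial>lborel) = I N"
      unfolding I_def F_def
      by (rule nn_integral_cong) (simp add: \<psi>_def norm_mult indicator_def)
    have "ennreal x * ennreal x \<le> ennreal x * L2sq h"
    proof -
      have "ennreal x * ennreal x = ennreal ((norm (LINT z|lborel. g z * \<psi> z))\<^sup>2)"
        using x0 by (simp add: e1 power2_eq_square ennreal_mult)
      also have "\<dots> \<le> L2sq h * ennreal x" using key unfolding e2 Ix .
      finally show ?thesis by (simp add: mult.commute)
    qed
    then have "ennreal x \<le> L2sq h"
      by (cases "x = 0") (simp_all add: ennreal_mult_le_mult_iff x0)
    then show ?thesis unfolding Ix .
  qed
  have sup: "(SUP N. F N z) = ennreal ((norm (g z))\<^sup>2)" for z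
  proof (rule antisym)
    show "(SUP N. F N z) \<le> ennreal ((norm (g z))\<^sup>2)"
      by (rule SUP_least) (auto simp: F_def indicator_def intro: ennreal_leI)
    obtain N :: nat where N: "max (norm z) (norm (g z)) \<le> real N" using real_arch_simple by blast
    then have "z \<in> E N" by (auto simp: E_def)
    then have "F N z = ennreal ((norm (g z))\<^sup>2)" by (simp add: F_def)
    then show "ennreal ((norm (g z))\<^sup>2) \<le> (SUP N. F N z)" by (metis UNIV_I SUP_upper)
  qed
  have inc: "incseq F"
  proof (rule incseq_SucI, rule le_funI)
    fix N z
    have "E N \<subseteq> E (Suc N)" by (auto simp: E_def)
    then show "F N z \<le> F (Suc N) z"
      by (auto simp: F_def indicator_def intro: ennreal_leI)
  qed
  have "L2sq g = (\<integral>\<^sup>+z. (SUP N. F N z) \<partial>lborel)"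
    unfolding L2sq_def sup ..
  also have "\<dots> = (SUP N. I N)"
    unfolding I_def by (rule nn_integral_monotone_convergence_SUP[OF inc]) simp
  also have "\<dots> \<le> L2sq h" by (rule SUP_least) (rule IN)
  finally show ?thesis .
qed

end
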